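(* In the message-passing model with $k$ sites holding subgraphs of an undirected graph $G$ on $n$ vertices (edge duplication allowed), there is a randomized protocol that, with probability at least $0.99$, outputs a value $\tilde D$ with $D\le\tilde D\le D+2$, where $D$ is the diameter of $G$ (the maximum over pairs of vertices of their shortest-path distance), and that uses $O(kn^{3/2}\log^2 n)$ bits of communication.
   Context: Message-passing model: $k$ sites $P_1,\dots,P_k$, each holding a private input; two-way point-to-point channels between every pair of sites; at the end some site outputs the answer; cost is total bits exchanged. Graph setting: each site $P_i$ holds a subgraph $G_i\subseteq G$ on the common vertex set, and $G$ is the union of the $G_i$; "edge duplication allowed" means an edge may be held by several sites. Logarithms are base 2. *)

theory Defs
  imports Complex_Main "HOL-Library.Extended_Nat" "HOL-Library.FuncSet"
begin

definition all_edges :: "nat \<Rightarrow> nat set set" where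
  "all_edges n = {e. \<exists>u v. u < n \<and> v < n \<and> u \<noteq> v \<and> e = {u, v}}"

definition is_walk :: "nat set set \<Rightarrow> nat list \<Rightarrow> bool" where
  "is_walk E p \<longleftrightarrow> p \<noteq> [] \<and> (\<forall>i. Suc i < length p \<longrightarrow> {p ! i, p ! Suc i} \<in> E)"

text \<open>Shortest-path distance (infinite if no path).\<close>
definition gdist :: "nat set set \<Rightarrow> nat \<Rightarrow> nat \<Rightarrow> enat" where
  "gdist E u v = (INF p \<in> {p. is_walk E p \<and> hd p = u \<and> last p = v}. enat (length p - 1))"

definition diameter :: "nat \<Rightarrow> nat set set \<Rightarrow> enat" where
  "diameter n E = (SUP u \<in> {..<n}. SUP v \<in> {..<n}. gdist E u v)"

text \<open>A transcript is the list of all messages (sender, receiver, bits) sent so far.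
  The view of site i is the subsequence of messages it sent or received.\<close>
type_synonym transcript = "(nat \<times> nat \<times> bool list) list"

definition view :: "nat \<Rightarrow> transcript \<Rightarrow> transcript" where
  "view i tr = filter (\<lambda>(s, j, m). s = i \<or> j = i) tr"

text \<open>A protocol: the currently active site, knowing only its own input, its own private
  random string and its own view, either sends a message to some other site (which then
  becomes active) or halts and outputs the answer.\<close>
type_synonym ('i, 'o) protocol =
  "nat \<Rightarrow> 'i \<Rightarrow> bool list \<Rightarrow> transcript \<Rightarrow> (nat \<times> bool list) + 'o"

fun exec :: "('i, 'o) protocol \<Rightarrow> (nat \<Rightarrow> 'i) \<Rightarrow> (nat \<Rightarrow> bool list)
    \<Rightarrow> nat \<Rightarrow> nat \<Rightarrow> transcript \<Rightarrow> (transcript \<times> 'o) option" where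
  "exec P x r 0 h tr = None"
| "exec P x r (Suc f) h tr =
     (case P h (x h) (r h) (view h tr) of
        Inr out \<Rightarrow> Some (tr, out)
      | Inl (j, m) \<Rightarrow> exec P x r f j (tr @ [(h, j, m)]))"

definition run :: "('i, 'o) protocol \<Rightarrow> (nat \<Rightarrow> 'i) \<Rightarrow> (nat \<Rightarrow> bool list)
    \<Rightarrow> nat \<Rightarrow> (transcript \<times> 'o) option" where
  "run P x r f = exec P x r f 0 []"

definition valid_transcript :: "nat \<Rightarrow> transcript \<Rightarrow> bool" where
  "valid_transcript k tr \<longleftrightarrow> (\<forall>(s, j, m) \<in> set tr. s < k \<and> j < k \<and> s \<noteq> j \<and> m \<noteq> [])"

definition cost :: "transcript \<Rightarrow> nat" where
  "cost tr = sum_list (map (\<lambda>(s, j, m). length m) tr)"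

definition rand_space :: "nat \<Rightarrow> nat \<Rightarrow> (nat \<Rightarrow> bool list) set" where
  "rand_space k R = PiE {..<k} (\<lambda>_. {xs :: bool list. length xs = R})"

end

theory Submission
  imports Defs "HOL-Library.Log_Nat"
begin

fun bits :: "nat \<Rightarrow> nat \<Rightarrow> bool list" where
  "bits 0 c = []"
| "bits (Suc w) c = odd c # bits w (c div 2)"

fun frombits :: "bool list \<Rightarrow> nat" where
  "frombits [] = 0"
| "frombits (b # bs) = (if b then 1 else 0) + 2 * frombits bs"

lemma length_bits[simp]: "length (bits w c) = w"
  by (induction w arbitrary: c) auto

lemma frombits_bits: "c < 2 ^ w \<Longrightarrow> frombits (bits w c) = c"
proof (induction w arbitrary: c)
  case 0 then show ?case by simp
next
  case (Suc w)
  have "c div 2 < 2 ^ w" using Suc.prems by auto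
  then have "frombits (bits w (c div 2)) = c div 2" using Suc.IH by blast
  then show ?case by simp
qed

fun enc :: "nat \<Rightarrow> nat list \<Rightarrow> bool list" where
  "enc w [] = [False]"
| "enc w (c # cs) = True # bits w c @ enc w cs"

function dec :: "nat \<Rightarrow> bool list \<Rightarrow> nat list" where
  "dec w (True # rest) = frombits (take w rest) # dec w (drop w rest)"
| "dec w [] = []"
| "dec w (False # rest) = []"
  by pat_completeness auto
termination by (relation "measure (\<lambda>(w, xs). length xs)") auto

lemma dec_enc: "\<forall>c\<in>set cs. c < 2 ^ w \<Longrightarrow> dec w (enc w cs) = cs"
  by (induction cs) (auto simp: frombits_bits)

lemma length_enc: "length (enc w cs) = 1 + (w + 1) * length cs"
  by (induction cs) auto

lemma enc_ne[simp]: "enc w cs \<noteq> []"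
  by (cases cs) auto

section \<open>Coordinator framework\<close>

type_synonym triple = "nat \<times> nat list \<times> nat list"

fun replay :: "('s \<Rightarrow> nat list \<Rightarrow> 's) \<Rightarrow> nat \<Rightarrow> 's \<Rightarrow> transcript \<Rightarrow> 's" where
  "replay upd w \<sigma> ((s1, j1, q) # (s2, j2, a) # rest) = replay upd w (upd \<sigma> (dec w a)) rest"
| "replay upd w \<sigma> _ = \<sigma>"

definition mkP :: "('s \<Rightarrow> (nat \<times> nat list) + enat) \<Rightarrow> ('s \<Rightarrow> nat list \<Rightarrow> 's)
   \<Rightarrow> (nat set set \<Rightarrow> 's) \<Rightarrow> (nat set set \<Rightarrow> nat list \<Rightarrow> nat list) \<Rightarrow> nat
   \<Rightarrow> (nat set set, enat) protocol" where
  "mkP nxt upd ini g w = (\<lambda>h inp r vw. if h = 0 then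
      (case nxt (replay upd w (ini inp) vw) of Inl (j, q) \<Rightarrow> Inl (j, enc w q) | Inr out \<Rightarrow> Inr out)
      else Inl (0, enc w (g inp (dec w (snd (snd (last vw)))))))"

definition T :: "nat \<Rightarrow> triple list \<Rightarrow> transcript" where
  "T w L = concat (map (\<lambda>(j, q, a). [(0, j, enc w q), (j, 0, enc w a)]) L)"

lemma T_Nil[simp]: "T w [] = []" by (simp add: T_def)
lemma T_append: "T w (L1 @ L2) = T w L1 @ T w L2" by (simp add: T_def)
lemma T_single: "T w [(j, q, a)] = [(0, j, enc w q), (j, 0, enc w a)]" by (simp add: T_def)

lemma replay_T: "replay upd w \<sigma> (T w L @ rest) = replay upd w (fold (\<lambda>(j,q,a) s. upd s (dec w (enc w a))) L \<sigma>) rest"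
  by (induction L arbitrary: \<sigma>) (auto simp: T_def)

inductive steps :: "('s \<Rightarrow> (nat \<times> nat list) + enat) \<Rightarrow> ('s \<Rightarrow> nat list \<Rightarrow> 's)
   \<Rightarrow> (nat set set \<Rightarrow> nat list \<Rightarrow> nat list) \<Rightarrow> (nat \<Rightarrow> nat set set) \<Rightarrow> 's \<Rightarrow> triple list \<Rightarrow> 's \<Rightarrow> bool"
  for nxt upd g x where
  refl: "steps nxt upd g x \<sigma> [] \<sigma>"
| step: "nxt \<sigma> = Inl (j, q) \<Longrightarrow> a = g (x j) q \<Longrightarrow> steps nxt upd g x (upd \<sigma> a) L \<sigma>'
     \<Longrightarrow> steps nxt upd g x \<sigma> ((j, q, a) # L) \<sigma>'"

lemma steps_trans: "steps nxt upd g x \<sigma>1 L1 \<sigma>2 \<Longrightarrow> steps nxt upd g x \<sigma>2 L2 \<sigma>3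
   \<Longrightarrow> steps nxt upd g x \<sigma>1 (L1 @ L2) \<sigma>3"
  by (induction rule: steps.induct) (auto intro: steps.intros)

lemma steps_one: "nxt \<sigma> = Inl (j, q) \<Longrightarrow> steps nxt upd g x \<sigma> [(j, q, g (x j) q)] (upd \<sigma> (g (x j) q))"
  by (auto intro: steps.intros)

definition okL :: "nat \<Rightarrow> nat \<Rightarrow> triple list \<Rightarrow> bool" where
  "okL k w L \<longleftrightarrow> (\<forall>(j, q, a) \<in> set L. 0 < j \<and> j < k \<and> (\<forall>c\<in>set q. c < 2 ^ w) \<and> (\<forall>c\<in>set a. c < 2 ^ w))"

lemma view0_T: "view 0 (T w L) = T w L"
  unfolding view_def T_def by (induction L) auto

lemma exec_steps:
  assumes "steps nxt upd g x \<sigma> L \<sigma>'" "nxt \<sigma>' = Inr out" "okL k w (L0 @ L)"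
    "replay upd w (ini (x 0)) (T w L0) = \<sigma>"
  shows "exec (mkP nxt upd ini g w) x r (2 * length L + 1) 0 (T w L0) = Some (T w L0 @ T w L, out)"
  using assms
proof (induction arbitrary: L0 rule: steps.induct)
  case (refl \<sigma>)
  then show ?case by (simp add: mkP_def view0_T)
next
  case (step \<sigma> j q a L \<sigma>')
  have okj: "0 < j" "j < k" "\<forall>c\<in>set q. c < 2 ^ w" "\<forall>c\<in>set a. c < 2 ^ w"
    using step.prems(2) by (auto simp: okL_def)
  have v: "view j (T w L0 @ [(0, j, enc w q)]) = view j (T w L0) @ [(0, j, enc w q)]"
    by (simp add: view_def)
  have rp: "replay upd w (ini (x 0)) (T w (L0 @ [(j, q, a)])) = upd \<sigma> a"
    using replay_T[of upd w "ini (x 0)" "L0 @ [(j, q, a)]" "[]"] replay_T[of upd w "ini (x 0)" L0 "[]"]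
      step.prems(3) okj(4) by (simp add: dec_enc)
  have IH: "exec (mkP nxt upd ini g w) x r (2 * length L + 1) 0 (T w (L0 @ [(j, q, a)])) =
      Some (T w (L0 @ [(j, q, a)]) @ T w L, out)"
    using step.IH[of "L0 @ [(j, q, a)]"] step.prems rp by simp
  have "exec (mkP nxt upd ini g w) x r (2 * length ((j, q, a) # L) + 1) 0 (T w L0)
      = exec (mkP nxt upd ini g w) x r (Suc (2 * length L + 1)) j (T w L0 @ [(0, j, enc w q)])"
    using step.hyps(1) step.prems(3) by (simp add: mkP_def view0_T)
  also have "\<dots> = exec (mkP nxt upd ini g w) x r (2 * length L + 1) 0 (T w (L0 @ [(j, q, a)]))"
    using okj step.hyps(2) by (simp add: mkP_def v dec_enc T_append T_single)
  finally show ?case using IH by (simp add: T_append T_single T_def)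
qed

lemma valid_T: "okL k w L \<Longrightarrow> valid_transcript k (T w L)"
  unfolding valid_transcript_def okL_def T_def by auto

definition lcost :: "triple list \<Rightarrow> nat" where
  "lcost L = sum_list (map (\<lambda>(j, q, a). 2 + length q + length a) L)"

lemma lcost_append[simp]: "lcost (L1 @ L2) = lcost L1 + lcost L2" by (simp add: lcost_def)
lemma lcost_Cons[simp]: "lcost ((j,q,a) # L) = 2 + length q + length a + lcost L" by (simp add: lcost_def)
lemma lcost_Nil[simp]: "lcost [] = 0" by (simp add: lcost_def)

lemma cost_T: "cost (T w L) \<le> (w + 1) * lcost L"
proof (induction L)
  case Nil then show ?case by (simp add: cost_def)
next
  case (Cons t L)
  obtain j q a where t: "t = (j, q, a)" by (cases t) auto
  have "cost (T w (t # L)) = length (enc w q) + length (enc w a) + cost (T w L)"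
    by (simp add: t cost_def T_def)
  also have "\<dots> \<le> (w + 1) * (2 + length q + length a) + (w + 1) * lcost L"
    using Cons by (simp add: length_enc algebra_simps)
  finally show ?case by (simp add: t algebra_simps)
qed


lemma is_walk_single[simp]: "is_walk E [a]"
  by (simp add: is_walk_def)

lemma is_walk_Cons2: "is_walk E (a # b # p) \<longleftrightarrow> {a, b} \<in> E \<and> is_walk E (b # p)"
  unfolding is_walk_def
  by (auto simp: nth_Cons split: nat.splits)

lemma is_walk_Nil[simp]: "\<not> is_walk E []" by (simp add: is_walk_def)

lemma is_walk_Cons_tl: "is_walk E (a # p) \<Longrightarrow> p \<noteq> [] \<Longrightarrow> is_walk E p"
  by (cases p) (auto simp: is_walk_Cons2)

lemma is_walk_join: "is_walk E p \<Longrightarrow> is_walk E q \<Longrightarrow> last p = hd q \<Longrightarrow> is_walk E (butlast p @ q)"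
proof (induction p rule: induct_list012)
  case 1 then show ?case by simp
next
  case (2 a) then show ?case by simp
next
  case (3 a b p)
  have w: "is_walk E (butlast (b # p) @ q)" using 3 by (auto simp: is_walk_Cons2)
  have hd: "hd (butlast (b # p) @ q) = b" using 3 by (cases p) auto
  obtain r where r: "butlast (b # p) @ q = b # r"
    using hd w by (cases "butlast (b # p) @ q") auto
  show ?case using 3 w r by (simp add: is_walk_Cons2)
qed

lemma is_walk_take: "is_walk E p \<Longrightarrow> i < length p \<Longrightarrow> is_walk E (take (Suc i) p)"
  unfolding is_walk_def by auto

lemma is_walk_drop: "is_walk E p \<Longrightarrow> i < length p \<Longrightarrow> is_walk E (drop i p)"
  unfolding is_walk_def by auto

lemma is_walk_rev: "is_walk E p \<Longrightarrow> is_walk E (rev p)"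
proof (induction p rule: induct_list012)
  case 1 then show ?case by simp
next
  case (2 a) then show ?case by simp
next
  case (3 a b p)
  have w1: "is_walk E (rev (b # p))" using 3 by (simp add: is_walk_Cons2)
  have w2: "is_walk E [b, a]" using 3 by (simp add: is_walk_Cons2 insert_commute)
  have "is_walk E (butlast (rev (b # p)) @ [b, a])"
    by (rule is_walk_join[OF w1 w2]) simp
  moreover have "butlast (rev (b # p)) @ [b, a] = rev (a # b # p)"
    by simp
  ultimately show ?case by simp
qed

lemma is_walk_mono: "is_walk E p \<Longrightarrow> E \<subseteq> E' \<Longrightarrow> is_walk E' p"
  unfolding is_walk_def by auto

definition walks :: "nat set set \<Rightarrow> nat \<Rightarrow> nat \<Rightarrow> nat list set" where
  "walks E u v = {p. is_walk E p \<and> hd p = u \<and> last p = v}"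

lemma gdist_walks: "gdist E u v = (INF p \<in> walks E u v. enat (length p - 1))"
  by (simp add: gdist_def walks_def)

lemma gdist_le: "is_walk E p \<Longrightarrow> hd p = u \<Longrightarrow> last p = v \<Longrightarrow> gdist E u v \<le> enat (length p - 1)"
  unfolding gdist_def by (rule INF_lower) auto

lemma gdist_obtain:
  assumes "gdist E u v = enat d"
  shows "\<exists>p. is_walk E p \<and> hd p = u \<and> last p = v \<and> length p = Suc d"
proof -
  let ?A = "(\<lambda>p. enat (length p - 1)) ` walks E u v"
  have g: "gdist E u v = Inf ?A" by (simp add: gdist_walks)
  have ne: "?A \<noteq> {}"
  proof
    assume "?A = {}"
    then have "gdist E u v = \<infinity>" unfolding g Inf_enat_def by simp
    then show False using assms by simp
  qed
  have "Inf ?A \<in> ?A"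
    unfolding Inf_enat_def using ne by (simp only: if_False) (rule LeastI_ex, blast)
  then obtain p where p1: "p \<in> walks E u v" and p2: "Inf ?A = enat (length p - 1)"
    by (auto simp only: image_iff)
  have p: "p \<in> walks E u v" "gdist E u v = enat (length p - 1)" using p1 p2 g by simp_all
  then have "p \<noteq> []" by (auto simp: walks_def)
  then show ?thesis using p assms by (auto simp: walks_def)
qed

lemma gdist_refl[simp]: "gdist E v v = 0"
proof -
  have "gdist E v v \<le> enat (length [v] - 1)" by (rule gdist_le) auto
  then have "gdist E v v \<le> 0" by (simp add: zero_enat_def)
  then show ?thesis by simp
qed

lemma gdist_zero_iff: "gdist E u v = 0 \<longleftrightarrow> u = v"
proof
  assume "gdist E u v = 0"
  then obtain p where p: "is_walk E p" "hd p = u" "last p = v" "length p = Suc 0"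
    using gdist_obtain[of E u v 0] by (auto simp: zero_enat_def)
  then show "u = v" by (cases p) auto
qed simp

lemma gdist_sym: "gdist E u v = gdist E v u"
proof -
  have *: "gdist E v u \<le> gdist E u v" for u v
  proof (cases "gdist E u v")
    case (enat d)
    then obtain p where p: "is_walk E p" "hd p = u" "last p = v" "length p = Suc d"
      using gdist_obtain by blast
    have "gdist E v u \<le> enat (length (rev p) - 1)"
      using p by (intro gdist_le) (auto simp: is_walk_rev hd_rev last_rev)
    then show ?thesis using p enat by simp
  qed simp
  show ?thesis using *[of u v] *[of v u] by simp
qed

lemma gdist_triangle: "gdist E u w \<le> gdist E u v + gdist E v w"
proof (cases "gdist E u v")
  case (enat d1)
  show ?thesis
  proof (cases "gdist E v w")
    case (enat d2)
    obtain p where p: "is_walk E p" "hd p = u" "last p = v" "length p = Suc d1"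
      using gdist_obtain \<open>gdist E u v = enat d1\<close> by blast
    obtain q where q: "is_walk E q" "hd q = v" "last q = w" "length q = Suc d2"
      using gdist_obtain enat by blast
    have "gdist E u w \<le> enat (length (butlast p @ q) - 1)"
    proof (rule gdist_le)
      show "is_walk E (butlast p @ q)" using p q by (intro is_walk_join) auto
      show "hd (butlast p @ q) = u"
      proof (cases d1)
        case 0 then show ?thesis using p q by (cases p) auto
      next
        case (Suc d) then show ?thesis using p by (cases p) (auto simp: hd_append)
      qed
      show "last (butlast p @ q) = w" using q by (cases q) auto
    qed
    then show ?thesis using p q \<open>gdist E u v = enat d1\<close> enat by simp
  qed (simp add: \<open>gdist E u v = enat d1\<close>)
qed simp

lemma gdist_edge: "{u, v} \<in> E \<Longrightarrow> gdist E u v \<le> 1"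
proof -
  assume "{u, v} \<in> E"
  then have "gdist E u v \<le> enat (length [u, v] - 1)"
    by (intro gdist_le) (auto simp: is_walk_Cons2)
  then show ?thesis by (simp add: one_enat_def)
qed

lemma gdist_mono: "E \<subseteq> E' \<Longrightarrow> gdist E' u v \<le> gdist E u v"
  unfolding gdist_def by (rule INF_superset_mono) (auto intro: is_walk_mono)

lemma gdist_take: "is_walk E p \<Longrightarrow> i < length p \<Longrightarrow> gdist E (hd p) (p ! i) \<le> enat i"
proof -
  assume a: "is_walk E p" "i < length p"
  have "gdist E (hd p) (p ! i) \<le> enat (length (take (Suc i) p) - 1)"
  proof (rule gdist_le)
    show "is_walk E (take (Suc i) p)" using a by (rule is_walk_take)
    show "hd (take (Suc i) p) = hd p" using a by (simp add: hd_take)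
    show "last (take (Suc i) p) = p ! i" using a by (simp add: take_Suc_conv_app_nth)
  qed
  then show ?thesis using a by simp
qed

lemma gdist_drop: "is_walk E p \<Longrightarrow> i < length p \<Longrightarrow> gdist E (p ! i) (last p) \<le> enat (length p - 1 - i)"
proof -
  assume a: "is_walk E p" "i < length p"
  have "gdist E (p ! i) (last p) \<le> enat (length (drop i p) - 1)"
  proof (rule gdist_le)
    show "is_walk E (drop i p)" using a by (rule is_walk_drop)
    show "hd (drop i p) = p ! i" using a by (simp add: hd_drop_conv_nth)
    show "last (drop i p) = last p" using a by simp
  qed
  then show ?thesis by simp
qed

lemma gdist_pred:
  assumes "gdist E w v = enat (Suc d)"
  shows "\<exists>u. gdist E w u = enat d \<and> {u, v} \<in> E"
proof -
  obtain p where p: "is_walk E p" "hd p = w" "last p = v" "length p = Suc (Suc d)"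
    using gdist_obtain assms by blast
  let ?u = "p ! d"
  have "{p ! d, p ! Suc d} \<in> E" using p(1,4) unfolding is_walk_def by simp
  moreover have "p ! Suc d = v" using p(3,4) last_conv_nth[of p] by fastforce
  ultimately have e: "{?u, v} \<in> E" by simp
  have le: "gdist E w ?u \<le> enat d" using gdist_take[OF p(1), of d] p by simp
  have "enat (Suc d) \<le> gdist E w ?u + 1"
    using gdist_triangle[of E w v ?u] gdist_edge[OF e] assms
    by (metis add_left_mono order_trans)
  then have "gdist E w ?u = enat d" using le
    by (cases "gdist E w ?u") (auto simp: one_enat_def)
  then show ?thesis using e by blast
qed


lemma edge_lt: "E \<subseteq> all_edges n \<Longrightarrow> {a, b} \<in> E \<Longrightarrow> a < n \<and> b < n \<and> a \<noteq> b"
  unfolding all_edges_def by (auto simp: doubleton_eq_iff)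

definition layer :: "nat set set \<Rightarrow> nat \<Rightarrow> nat \<Rightarrow> nat \<Rightarrow> nat set" where
  "layer E n w d = {v. v < n \<and> gdist E w v = enat d}"

lemma layer_0: "w < n \<Longrightarrow> layer E n w 0 = {w}"
  unfolding layer_def using gdist_zero_iff[of E w] by (auto simp: zero_enat_def[symmetric])

lemma layer_Suc:
  assumes E: "E \<subseteq> all_edges n"
  shows "layer E n w (Suc d) = {u. u < n \<and> u \<notin> (if d = 0 then {} else layer E n w (d - 1))
      \<and> u \<notin> layer E n w d \<and> (\<exists>v\<in>layer E n w d. {v, u} \<in> E)}"
proof (intro set_eqI iffI)
  fix u assume u: "u \<in> layer E n w (Suc d)"
  then have g: "gdist E w u = enat (Suc d)" and un: "u < n" by (auto simp: layer_def)
  obtain v where v: "gdist E w v = enat d" "{v, u} \<in> E" using gdist_pred[OF g] by blast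
  have "v < n" using edge_lt[OF E v(2)] by simp
  then show "u \<in> {u. u < n \<and> u \<notin> (if d = 0 then {} else layer E n w (d - 1))
      \<and> u \<notin> layer E n w d \<and> (\<exists>v\<in>layer E n w d. {v, u} \<in> E)}"
    using g un v by (auto simp: layer_def)
next
  fix u assume u: "u \<in> {u. u < n \<and> u \<notin> (if d = 0 then {} else layer E n w (d - 1))
      \<and> u \<notin> layer E n w d \<and> (\<exists>v\<in>layer E n w d. {v, u} \<in> E)}"
  then obtain v where un: "u < n" and nprev: "u \<notin> (if d = 0 then {} else layer E n w (d - 1))"
    and ncur: "u \<notin> layer E n w d" and v: "gdist E w v = enat d" "{v, u} \<in> E"
    by (auto simp: layer_def)
  have e1: "gdist E v u \<le> 1" using gdist_edge[OF v(2)] .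
  have e2: "gdist E u v \<le> 1" using e1 by (simp add: gdist_sym)
  have up: "gdist E w u \<le> enat d + 1"
    using gdist_triangle[of E w u v] e1 v(1) by (metis add_left_mono order_trans)
  have lo: "enat d \<le> gdist E w u + 1"
    using gdist_triangle[of E w v u] e2 v(1) by (metis add_left_mono order_trans)
  have up': "gdist E w u \<le> enat (Suc d)" using up by (simp add: one_enat_def)
  obtain m where m: "gdist E w u = enat m" using up' by (cases "gdist E w u") auto
  have "m \<le> Suc d" "d \<le> Suc m" using up lo m by (auto simp: one_enat_def)
  moreover have "m \<noteq> d" using ncur un m by (auto simp: layer_def)
  moreover have "d > 0 \<Longrightarrow> m \<noteq> d - 1" using nprev un m by (auto simp: layer_def)
  ultimately have "m = Suc d" by (cases d) auto
  then show "u \<in> layer E n w (Suc d)" using m un by (simp add: layer_def)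
qed

lemma gdist_descend:
  "gdist E w u = enat m \<Longrightarrow> j \<le> m \<Longrightarrow> \<exists>v. gdist E w v = enat j \<and> (0 < j \<longrightarrow> (\<exists>z. {z, v} \<in> E))"
proof (induction m arbitrary: u)
  case 0 then show ?case by auto
next
  case (Suc m)
  show ?case
  proof (cases "j = Suc m")
    case True
    then show ?thesis using Suc.prems(1) gdist_pred[OF Suc.prems(1)] by blast
  next
    case False
    obtain z where "gdist E w z = enat m" using gdist_pred[OF Suc.prems(1)] by blast
    then show ?thesis using Suc.IH[of z] Suc.prems(2) False by simp
  qed
qed

lemma far_empty:
  assumes E: "E \<subseteq> all_edges n" and emp: "layer E n w (Suc D) = {}" and g: "gdist E w u = enat m"
  shows "m \<le> D"
proof (rule ccontr)
  assume "\<not> m \<le> D"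
  then obtain v z where v: "gdist E w v = enat (Suc D)" "{z, v} \<in> E"
    using gdist_descend[OF g, of "Suc D"] by auto
  then have "v < n" using edge_lt[OF E v(2)] by simp
  then have "v \<in> layer E n w (Suc D)" using v by (simp add: layer_def)
  then show False using emp by simp
qed

definition ldist :: "nat set list \<Rightarrow> nat \<Rightarrow> enat" where
  "ldist lay u = (if \<exists>i<length lay. u \<in> lay ! i then enat (LEAST i. i < length lay \<and> u \<in> lay ! i) else \<infinity>)"

lemma ldist_correct:
  assumes E: "E \<subseteq> all_edges n" and lay: "lay = map (layer E n w) [0..<Suc D]"
    and emp: "layer E n w (Suc D) = {}" and u: "u < n"
  shows "ldist lay u = gdist E w u"
proof (cases "gdist E w u")
  case (enat m)
  have mD: "m \<le> D" using far_empty[OF E emp enat] .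
  have mem: "u \<in> lay ! m" using mD u enat lay by (simp add: layer_def nth_append del: upt_Suc)
  have ex: "\<exists>i<length lay. u \<in> lay ! i" using mem mD lay by (intro exI[of _ m]) simp
  have "(LEAST i. i < length lay \<and> u \<in> lay ! i) = m"
  proof (rule Least_equality)
    show "m < length lay \<and> u \<in> lay ! m" using mem mD lay by simp
    fix i assume "i < length lay \<and> u \<in> lay ! i"
    then have "gdist E w u = enat i" using lay by (auto simp: layer_def simp del: upt_Suc)
    then show "m \<le> i" using enat by simp
  qed
  then show ?thesis using ex enat by (simp add: ldist_def)
next
  case infinity
  have "\<not> (\<exists>i<length lay. u \<in> lay ! i)"
    using infinity lay by (auto simp: layer_def simp del: upt_Suc)
  then show ?thesis using infinity by (simp add: ldist_def)
qed

section \<open>Additive-2 estimate\<close>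

definition estp :: "nat set set \<Rightarrow> (nat \<times> nat set list) list \<Rightarrow> nat \<Rightarrow> nat \<Rightarrow> enat" where
  "estp Ls dn u v = min (gdist Ls u v) (INF p\<in>set dn. ldist (snd p) u + ldist (snd p) v)"

definition est :: "nat \<Rightarrow> nat set set \<Rightarrow> (nat \<times> nat set list) list \<Rightarrow> enat" where
  "est n Ls dn = (SUP u\<in>{..<n}. SUP v\<in>{..<n}. estp Ls dn u v)"

lemma walk_vertex_lt:
  assumes E: "E \<subseteq> all_edges n" and p: "is_walk E p" "hd p < n" and i: "i < length p"
  shows "p ! i < n"
proof (cases i)
  case 0 then show ?thesis using p i by (simp add: hd_conv_nth)
next
  case (Suc j)
  have "{p ! j, p ! Suc j} \<in> E" using p i Suc unfolding is_walk_def by simp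
  then show ?thesis using edge_lt[OF E] Suc by blast
qed

lemma estp_bounds:
  assumes E: "E \<subseteq> all_edges n" and LsE: "Ls \<subseteq> E"
    and light: "\<forall>a b. {a, b} \<in> E \<longrightarrow> lt a \<longrightarrow> {a, b} \<in> Ls"
    and heavy: "\<forall>x<n. \<not> lt x \<longrightarrow> (\<exists>p\<in>set dn. {x, fst p} \<in> E)"
    and dnok: "\<forall>p\<in>set dn. \<forall>u<n. ldist (snd p) u = gdist E (fst p) u"
    and u: "u < n" and v: "v < n"
  shows "gdist E u v \<le> estp Ls dn u v" "estp Ls dn u v \<le> gdist E u v + 2"
proof -
  have "gdist E u v \<le> gdist Ls u v" by (rule gdist_mono[OF LsE])
  moreover have "gdist E u v \<le> (INF p\<in>set dn. ldist (snd p) u + ldist (snd p) v)"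
  proof (rule INF_greatest)
    fix p assume p: "p \<in> set dn"
    have "gdist E u v \<le> gdist E u (fst p) + gdist E (fst p) v" by (rule gdist_triangle)
    also have "\<dots> = ldist (snd p) u + ldist (snd p) v"
      using dnok p u v by (simp add: gdist_sym)
    finally show "gdist E u v \<le> ldist (snd p) u + ldist (snd p) v" .
  qed
  ultimately show "gdist E u v \<le> estp Ls dn u v" by (simp add: estp_def)
next
  show "estp Ls dn u v \<le> gdist E u v + 2"
  proof (cases "gdist E u v")
    case infinity then show ?thesis by simp
  next
    case (enat d)
    obtain p where p: "is_walk E p" "hd p = u" "last p = v" "length p = Suc d"
      using gdist_obtain[OF enat] by blast
    have lt_p: "\<And>i. i < length p \<Longrightarrow> p ! i < n"
      using walk_vertex_lt[OF E p(1)] p(2) u by simp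
    show ?thesis
    proof (cases "\<forall>i<length p. lt (p ! i)")
      case True
      have "is_walk Ls p"
        using p(1) True light unfolding is_walk_def by auto
      then have "gdist Ls u v \<le> enat d" using gdist_le[of Ls p u v] p by simp
      then have "estp Ls dn u v \<le> enat d" by (simp add: estp_def min.coboundedI1)
      moreover have "enat d \<le> enat d + 2" by (simp add: numeral_eq_enat)
      ultimately show ?thesis using enat order_trans by metis
    next
      case False
      then obtain i where i: "i < length p" "\<not> lt (p ! i)" by blast
      obtain q where q: "q \<in> set dn" "{p ! i, fst q} \<in> E" using heavy lt_p[OF i(1)] i(2) by blast
      have ed: "gdist E (fst q) (p ! i) \<le> 1" using gdist_edge[OF q(2)] by (simp add: gdist_sym)
      have d1: "gdist E u (p ! i) \<le> enat i" using gdist_take[OF p(1) i(1)] p(2) by simp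
      have d2: "gdist E (p ! i) v \<le> enat (d - i)" using gdist_drop[OF p(1) i(1)] p by simp
      have "gdist E (fst q) u \<le> 1 + enat i"
        using gdist_triangle[of E "fst q" u "p ! i"] ed d1 by (simp add: gdist_sym add_mono order_trans)
      moreover have "gdist E (fst q) v \<le> 1 + enat (d - i)"
        using gdist_triangle[of E "fst q" v "p ! i"] ed d2 by (simp add: add_mono order_trans)
      ultimately have "ldist (snd q) u + ldist (snd q) v \<le> (1 + enat i) + (1 + enat (d - i))"
        using dnok q(1) u v by (simp add: add_mono)
      also have "\<dots> = enat d + 2" using i p(4) by (simp add: one_enat_def numeral_eq_enat)
      finally have "(INF p\<in>set dn. ldist (snd p) u + ldist (snd p) v) \<le> enat d + 2"
        using q(1) by (meson INF_lower2)
      then show ?thesis using enat by (simp add: estp_def min.coboundedI2)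
    qed
  qed
qed

lemma est_bounds:
  assumes E: "E \<subseteq> all_edges n" and LsE: "Ls \<subseteq> E"
    and light: "\<forall>a b. {a, b} \<in> E \<longrightarrow> lt a \<longrightarrow> {a, b} \<in> Ls"
    and heavy: "\<forall>x<n. \<not> lt x \<longrightarrow> (\<exists>p\<in>set dn. {x, fst p} \<in> E)"
    and dnok: "\<forall>p\<in>set dn. \<forall>u<n. ldist (snd p) u = gdist E (fst p) u"
  shows "diameter n E \<le> est n Ls dn" "est n Ls dn \<le> diameter n E + 2"
proof -
  note b = estp_bounds[OF E LsE light heavy dnok]
  show "diameter n E \<le> est n Ls dn"
    unfolding diameter_def est_def
  proof (rule SUP_subset_mono[OF subset_refl])
    fix u assume u: "u \<in> {..<n}"
    show "(SUP v\<in>{..<n}. gdist E u v) \<le> (SUP v\<in>{..<n}. estp Ls dn u v)"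
      by (rule SUP_subset_mono[OF subset_refl]) (use b(1) u in auto)
  qed
  show "est n Ls dn \<le> diameter n E + 2"
    unfolding est_def
  proof (intro SUP_least)
    fix u v assume uv: "u \<in> {..<n}" "v \<in> {..<n}"
    have "gdist E u v \<le> (SUP v\<in>{..<n}. gdist E u v)" using uv(2) by (rule SUP_upper)
    also have "\<dots> \<le> diameter n E" unfolding diameter_def using uv(1)
      by (rule SUP_upper[where f="\<lambda>u. SUP v\<in>{..<n}. gdist E u v"])
    finally have "gdist E u v \<le> diameter n E" .
    then show "estp Ls dn u v \<le> diameter n E + 2"
      using b(2)[of u v] uv by (meson add_right_mono lessThan_iff order_trans)
  qed
qed

section \<open>Hitting sets\<close>

lemma hitting_set:
  assumes "finite F" "\<forall>A\<in>F. A \<subseteq> {..<n} \<and> s \<le> card A" "s \<le> n" "0 < n"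
    "real (card F) * (1 - real s / real n) ^ t < 1"
  shows "\<exists>S \<subseteq> {..<n}. card S \<le> t \<and> (\<forall>A\<in>F. S \<inter> A \<noteq> {})"
  using assms
proof (induction t arbitrary: F)
  case 0
  then have "F = {}" by simp
  then show ?case by auto
next
  case (Suc t)
  note fin = Suc.prems(1) and FA = Suc.prems(2) and sn = Suc.prems(3) and n0 = Suc.prems(4)
  show ?case
  proof (cases "F = {}")
    case True then show ?thesis by auto
  next
    case False
    define c where "c e = card {A\<in>F. e \<in> A}" for e
    have cs: "c e = (\<Sum>A\<in>F. if e \<in> A then 1 else 0)" for e
    proof -
      have "{A\<in>F. e \<in> A} = F \<inter> {A. e \<in> A}" by auto
      then show ?thesis unfolding c_def using fin by (simp add: sum.If_cases)
    qed
    have "(\<Sum>e<n. c e) = (\<Sum>A\<in>F. \<Sum>e<n. if e \<in> A then 1 else 0)"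
      unfolding cs by (rule sum.swap)
    also have "\<dots> = (\<Sum>A\<in>F. card A)"
    proof (rule sum.cong[OF HOL.refl])
      fix A assume "A \<in> F"
      then have "A \<subseteq> {..<n}" using FA by blast
      then have "{..<n} \<inter> A = A" by blast
      then show "(\<Sum>e<n. if e \<in> A then 1 else 0) = card A"
        by (simp add: sum.If_cases)
    qed
    also have "\<dots> \<ge> (\<Sum>A\<in>F. s)" using FA by (intro sum_mono) auto
    finally have tot: "s * card F \<le> (\<Sum>e<n. c e)" by (simp add: mult.commute)
    have "\<exists>e<n. s * card F \<le> n * c e"
    proof (rule ccontr)
      assume "\<not> ?thesis"
      then have "\<forall>e\<in>{..<n}. n * c e < s * card F" by auto
      then have "(\<Sum>e<n. n * c e) < (\<Sum>e<n. s * card F)"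
        using n0 by (intro sum_strict_mono) auto
      then have "n * (\<Sum>e<n. c e) < n * (s * card F)" by (simp add: sum_distrib_left)
      then show False using tot n0 by simp
    qed
    then obtain e where e: "e < n" "s * card F \<le> n * c e" by blast
    define F' where "F' = {A\<in>F. e \<notin> A}"
    have cardF: "card F = card F' + c e"
    proof -
      have "F = F' \<union> {A\<in>F. e \<in> A}" "F' \<inter> {A\<in>F. e \<in> A} = {}" by (auto simp: F'_def)
      then show ?thesis using fin unfolding c_def by (metis card_Un_disjoint finite_Un)
    qed
    have q: "real (card F') \<le> real (card F) * (1 - real s / real n)"
    proof -
      have "real s * real (card F) \<le> real n * real (c e)" using e(2) by (metis of_nat_mult of_nat_le_iff)
      then have "real s * real (card F) / real n \<le> real (c e)" using n0
        by (simp add: divide_le_eq mult.commute)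
      moreover have "real (card F) = real (card F') + real (c e)" using cardF by simp
      moreover have "real (card F) * (1 - real s / real n) = real (card F) - real s * real (card F) / real n"
        by (simp add: algebra_simps)
      ultimately show ?thesis by linarith
    qed
    have nn: "0 \<le> (1 - real s / real n) ^ t" using sn n0 by simp
    have "real (card F') * (1 - real s / real n) ^ t \<le> real (card F) * (1 - real s / real n) * (1 - real s / real n) ^ t"
      using q nn by (rule mult_right_mono)
    also have "\<dots> < 1" using Suc.prems(5) by (simp add: algebra_simps)
    finally have lt: "real (card F') * (1 - real s / real n) ^ t < 1" .
    obtain S where S: "S \<subseteq> {..<n}" "card S \<le> t" "\<forall>A\<in>F'. S \<inter> A \<noteq> {}"
      using Suc.IH[of F'] fin FA sn n0 lt by (auto simp: F'_def)
    have fS: "finite S" using S(1) finite_subset by blast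
    have "card (insert e S) \<le> Suc t" using S(2) fS by (simp add: card_insert_if)
    moreover have "\<forall>A\<in>F. insert e S \<inter> A \<noteq> {}" using S(3) by (auto simp: F'_def)
    ultimately show ?thesis using S(1) e(1) by (intro exI[of _ "insert e S"]) auto
  qed
qed


definition nbl :: "nat \<Rightarrow> nat \<Rightarrow> nat set set \<Rightarrow> nat \<Rightarrow> nat list" where
  "nbl n s E v = take s (filter (\<lambda>u. {v, u} \<in> E) [0..<n])"

definition gA :: "nat \<Rightarrow> nat \<Rightarrow> nat set set \<Rightarrow> nat list" where
  "gA n s E = concat (map (\<lambda>v. map (\<lambda>u. v * n + u) (nbl n s E v)) [0..<n])"

definition gB :: "nat \<Rightarrow> nat set set \<Rightarrow> nat list \<Rightarrow> nat list" where
  "gB n E q = filter (\<lambda>u. u \<notin> set q \<and> u + n \<notin> set q \<and> (\<exists>v<n. v + n \<in> set q \<and> {v, u} \<in> E)) [0..<n]"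

definition gr :: "nat \<Rightarrow> nat \<Rightarrow> nat set set \<Rightarrow> nat list \<Rightarrow> nat list" where
  "gr n s E q = (if q = [] then gA n s E else gB n E q)"

definition prevL :: "nat set list \<Rightarrow> nat set" where
  "prevL lay = (if 2 \<le> length lay then lay ! (length lay - 2) else {})"

definition qry :: "nat \<Rightarrow> nat set list \<Rightarrow> nat list" where
  "qry n lay = sorted_list_of_set (prevL lay) @ map (\<lambda>v. v + n) (sorted_list_of_set (last lay))"

definition pdec :: "nat \<Rightarrow> nat list \<Rightarrow> (nat \<times> nat) set" where
  "pdec n a = (\<lambda>c. (c div n, c mod n)) ` set a"

definition Kof :: "(nat \<times> nat) set \<Rightarrow> nat \<Rightarrow> nat set" where
  "Kof P v = {u. (v, u) \<in> P}"

definition Lof :: "nat \<Rightarrow> nat \<Rightarrow> (nat \<times> nat) set \<Rightarrow> nat set set" where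
  "Lof n s P = {{v, u} | v u. v < n \<and> card (Kof P v) < s \<and> u \<in> Kof P v}"

definition Sof :: "nat \<Rightarrow> nat \<Rightarrow> nat \<Rightarrow> (nat \<times> nat) set \<Rightarrow> nat set" where
  "Sof n s t P = (SOME S. S \<subseteq> {..<n} \<and> card S \<le> t \<and> (\<forall>v<n. s \<le> card (Kof P v) \<longrightarrow> S \<inter> Kof P v \<noteq> {}))"

datatype st = PhA "nat set set" nat "(nat \<times> nat) set"
  | PhB "nat set set" "nat set set" "nat list" nat "nat set list" "nat set" nat "(nat \<times> nat set list) list"
  | Fin enat

definition startBFS :: "nat \<Rightarrow> nat set set \<Rightarrow> nat set set \<Rightarrow> nat list \<Rightarrow> (nat \<times> nat set list) list \<Rightarrow> st" where
  "startBFS n x0 Ls ws dn = (case ws of [] \<Rightarrow> Fin (est n Ls dn)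
     | w # ws' \<Rightarrow> PhB x0 Ls ws' w [{w}] (set (gB n x0 (qry n [{w}]))) 1 dn)"

definition startB :: "nat \<Rightarrow> nat \<Rightarrow> nat \<Rightarrow> nat set set \<Rightarrow> (nat \<times> nat) set \<Rightarrow> st" where
  "startB n s t x0 P = startBFS n x0 (Lof n s P) (sorted_list_of_set (Sof n s t P)) []"

fun nxt :: "nat \<Rightarrow> st \<Rightarrow> (nat \<times> nat list) + enat" where
  "nxt n (PhA x0 j P) = Inl (j, [])"
| "nxt n (PhB x0 Ls ws w lay acc j dn) = Inl (j, qry n lay)"
| "nxt n (Fin out) = Inr out"

definition fin_level :: "nat \<Rightarrow> nat set set \<Rightarrow> nat set set \<Rightarrow> nat list \<Rightarrow> nat \<Rightarrow> nat set list \<Rightarrow> nat set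
   \<Rightarrow> (nat \<times> nat set list) list \<Rightarrow> st" where
  "fin_level n x0 Ls ws w lay acc dn = (if acc = {} then startBFS n x0 Ls ws ((w, lay) # dn)
     else PhB x0 Ls ws w (lay @ [acc]) (set (gB n x0 (qry n (lay @ [acc])))) 1 dn)"

fun upd :: "nat \<Rightarrow> nat \<Rightarrow> nat \<Rightarrow> nat \<Rightarrow> st \<Rightarrow> nat list \<Rightarrow> st" where
  "upd n k s t (PhA x0 j P) a = (if Suc j < k then PhA x0 (Suc j) (P \<union> pdec n a)
      else startB n s t x0 (P \<union> pdec n a))"
| "upd n k s t (PhB x0 Ls ws w lay acc j dn) a = (if Suc j < k then PhB x0 Ls ws w lay (acc \<union> set a) (Suc j) dn
      else fin_level n x0 Ls ws w lay (acc \<union> set a) dn)"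
| "upd n k s t (Fin out) a = Fin out"

definition ini :: "nat \<Rightarrow> nat \<Rightarrow> nat set set \<Rightarrow> st" where
  "ini n s x0 = PhA x0 1 (pdec n (gA n s x0))"

abbreviation "STEPS n k s t x \<equiv> steps (nxt n) (upd n k s t) (gr n s) x"

lemma phaseA:
  assumes "1 \<le> j" "j < k"
  shows "STEPS n k s t x (PhA x0 j P) (map (\<lambda>i. (i, [], gA n s (x i))) [j..<k])
     (startB n s t x0 (P \<union> (\<Union>i\<in>{j..<k}. pdec n (gA n s (x i)))))"
  using assms
proof (induction "k - j" arbitrary: j P)
  case 0 then show ?case by simp
next
  case (Suc m)
  show ?case
  proof (cases "Suc j < k")
    case True
    have IH: "STEPS n k s t x (PhA x0 (Suc j) (P \<union> pdec n (gA n s (x j))))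
       (map (\<lambda>i. (i, [], gA n s (x i))) [Suc j..<k])
       (startB n s t x0 ((P \<union> pdec n (gA n s (x j))) \<union> (\<Union>i\<in>{Suc j..<k}. pdec n (gA n s (x i)))))"
      using Suc True by (intro Suc.hyps) auto
    have e1: "[j..<k] = j # [Suc j..<k]" using True by (simp add: upt_rec)
    have e2: "{j..<k} = insert j {Suc j..<k}" using True by auto
    have "STEPS n k s t x (PhA x0 j P) ((j, [], gA n s (x j)) # map (\<lambda>i. (i, [], gA n s (x i))) [Suc j..<k])
       (startB n s t x0 ((P \<union> pdec n (gA n s (x j))) \<union> (\<Union>i\<in>{Suc j..<k}. pdec n (gA n s (x i)))))"
      by (rule steps.step[where j=j and q="[]"]) (use IH True in \<open>auto simp: gr_def\<close>)
    then show ?thesis using e1 e2 by (simp add: Un_assoc)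
  next
    case False
    then have kk: "k = Suc j" using Suc.prems by simp
    have "STEPS n k s t x (PhA x0 j P) [(j, [], gA n s (x j))] (startB n s t x0 (P \<union> pdec n (gA n s (x j))))"
      by (rule steps.step[where j=j and q="[]"]) (use kk in \<open>auto simp: gr_def intro: steps.refl\<close>)
    then show ?thesis using kk by simp
  qed
qed

lemma set_nbl: "set (nbl n s E v) \<subseteq> {u. u < n \<and> {v, u} \<in> E}"
  unfolding nbl_def by (auto dest: in_set_takeD)

lemma pdec_gA:
  assumes "0 < n"
  shows "pdec n (gA n s E) = {(v, u). v < n \<and> u \<in> set (nbl n s E v)}"
proof -
  have "(v * n + u) div n = v \<and> (v * n + u) mod n = u" if "u < n" for v u
    using that assms by simp
  then show ?thesis
    unfolding pdec_def gA_def using set_nbl[of n s E]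
    by (force simp: image_iff)
qed

lemma length_gA: "length (gA n s E) \<le> n * s"
proof -
  have "length (gA n s E) = (\<Sum>v\<leftarrow>[0..<n]. length (nbl n s E v))"
    by (simp add: gA_def length_concat comp_def)
  also have "\<dots> \<le> (\<Sum>v\<leftarrow>[0..<n]. s)"
    by (rule sum_list_mono) (simp add: nbl_def)
  finally show ?thesis by (simp add: sum_list_triv)
qed

lemma gA_lt: "c \<in> set (gA n s E) \<Longrightarrow> c < n * n"
proof -
  assume "c \<in> set (gA n s E)"
  then obtain v u where "v < n" "u < n" "c = v * n + u"
    unfolding gA_def using set_nbl by fastforce
  moreover have "v * n + u < n * n"
  proof -
    have "v * n + u < v * n + n" using \<open>u < n\<close> by simp
    also have "\<dots> = Suc v * n" by simp
    also have "\<dots> \<le> n * n" using \<open>v < n\<close> by (intro mult_le_mono1) simp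
    finally show ?thesis .
  qed
  ultimately show ?thesis by simp
qed

lemma set_qry:
  assumes "finite A" "finite B" "A \<subseteq> {..<n}"
  shows "set (sorted_list_of_set A @ map (\<lambda>v. v + n) (sorted_list_of_set B)) = A \<union> (\<lambda>v. v + n) ` B"
  using assms by simp

lemma gB_set:
  assumes "prev \<subseteq> {..<n}" "cur \<subseteq> {..<n}" "finite prev" "finite cur"
  shows "set (gB n E (sorted_list_of_set prev @ map (\<lambda>v. v + n) (sorted_list_of_set cur)))
     = {u. u < n \<and> u \<notin> prev \<and> u \<notin> cur \<and> (\<exists>v\<in>cur. {v, u} \<in> E)}"
  using assms unfolding gB_def by (auto simp: image_iff)

lemma length_qry:
  assumes "finite A" "finite B"
  shows "length (sorted_list_of_set A @ map (\<lambda>v. v + n) (sorted_list_of_set B)) = card A + card B"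
  using assms by simp

lemma length_gB_le:
  assumes "set (gB n E q) \<subseteq> N" "finite N"
  shows "length (gB n E q) \<le> card N"
proof -
  have "distinct (gB n E q)" by (simp add: gB_def)
  then have "length (gB n E q) = card (set (gB n E q))" by (simp add: distinct_card)
  also have "\<dots> \<le> card N" using assms by (intro card_mono) auto
  finally show ?thesis .
qed


lemma okL_append[simp]: "okL k W (L1 @ L2) \<longleftrightarrow> okL k W L1 \<and> okL k W L2"
  unfolding okL_def by (simp only: set_append ball_Un)

lemma okL_Nil[simp]: "okL k W []" by (simp add: okL_def)

lemma lcost_map_le:
  assumes "\<forall>i\<in>set xs. (case f i of (j, q, a) \<Rightarrow> 2 + length q + length a) \<le> c"
  shows "lcost (map f xs) \<le> length xs * c"
  using assms
proof (induction xs)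
  case Nil then show ?case by simp
next
  case (Cons y xs)
  obtain j q a where f: "f y = (j, q, a)" by (cases "f y") auto
  have "2 + length q + length a \<le> c" using Cons.prems f by auto
  then show ?case using Cons f by simp
qed

lemma level:
  assumes "1 \<le> j" "j < k" "q = qry n lay" "q \<noteq> []"
  shows "STEPS n k s t x (PhB x0 Ls ws w lay acc j dn) (map (\<lambda>i. (i, q, gB n (x i) q)) [j..<k])
     (fin_level n x0 Ls ws w lay (acc \<union> (\<Union>i\<in>{j..<k}. set (gB n (x i) q))) dn)"
  using assms
proof (induction "k - j" arbitrary: j acc)
  case 0 then show ?case by simp
next
  case (Suc m)
  show ?case
  proof (cases "Suc j < k")
    case True
    have IH: "STEPS n k s t x (PhB x0 Ls ws w lay (acc \<union> set (gB n (x j) q)) (Suc j) dn)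
       (map (\<lambda>i. (i, q, gB n (x i) q)) [Suc j..<k])
       (fin_level n x0 Ls ws w lay ((acc \<union> set (gB n (x j) q)) \<union> (\<Union>i\<in>{Suc j..<k}. set (gB n (x i) q))) dn)"
      using Suc True by (intro Suc.hyps) auto
    have e1: "[j..<k] = j # [Suc j..<k]" using True by (simp add: upt_rec)
    have e2: "{j..<k} = insert j {Suc j..<k}" using True by auto
    have "STEPS n k s t x (PhB x0 Ls ws w lay acc j dn) ((j, q, gB n (x j) q) # map (\<lambda>i. (i, q, gB n (x i) q)) [Suc j..<k])
       (fin_level n x0 Ls ws w lay ((acc \<union> set (gB n (x j) q)) \<union> (\<Union>i\<in>{Suc j..<k}. set (gB n (x i) q))) dn)"
      by (rule steps.step[where j=j and q=q]) (use IH True Suc.prems in \<open>auto simp: gr_def\<close>)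
    then show ?thesis using e1 e2 by (simp add: Un_assoc)
  next
    case False
    then have kk: "k = Suc j" using Suc.prems by simp
    have "STEPS n k s t x (PhB x0 Ls ws w lay acc j dn) [(j, q, gB n (x j) q)]
       (fin_level n x0 Ls ws w lay (acc \<union> set (gB n (x j) q)) dn)"
      by (rule steps.step[where j=j and q=q]) (use kk Suc.prems in \<open>auto simp: gr_def intro: steps.refl\<close>)
    then show ?thesis using kk by simp
  qed
qed

locale setting =
  fixes n k s t W :: nat and x :: "nat \<Rightarrow> nat set set"
  assumes k2: "2 \<le> k" and xe: "\<forall>i<k. x i \<subseteq> all_edges n" and n0: "0 < n"
    and Wb: "2 * n + n * n \<le> 2 ^ W"
begin

definition G :: "nat set set" where "G = (\<Union>i<k. x i)"

lemma G_sub: "G \<subseteq> all_edges n"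
  using xe by (auto simp: G_def)

definition lay :: "nat \<Rightarrow> nat \<Rightarrow> nat set list" where
  "lay w d = map (layer G n w) [0..<Suc d]"

definition R :: "nat \<Rightarrow> nat \<Rightarrow> nat set" where
  "R w j = {v. v < n \<and> (\<exists>m. j \<le> m \<and> gdist G w v = enat m)}"

lemma layer_sub: "layer G n w d \<subseteq> {..<n}" by (auto simp: layer_def)
lemma layer_fin[simp]: "finite (layer G n w d)" using layer_sub finite_subset by blast
lemma R_fin[simp]: "finite (R w j)" by (rule finite_subset[of _ "{..<n}"]) (auto simp: R_def)
lemma R_Suc: "R w j = layer G n w j \<union> R w (Suc j)"
  by (auto simp: R_def layer_def)
lemma R_disj: "layer G n w j \<inter> R w (Suc j) = {}"
  by (auto simp: R_def layer_def)
lemma card_R: "card (R w j) = card (layer G n w j) + card (R w (Suc j))"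
  using R_Suc[of w j] R_disj[of w j] by (simp add: card_Un_disjoint)
lemma card_R_le: "card (R w j) \<le> n"
  using card_mono[of "{..<n}" "R w j"] by (auto simp: R_def)

lemma last_lay[simp]: "last (lay w d) = layer G n w d"
  by (simp add: lay_def)

lemma prevL_lay: "prevL (lay w d) = (if d = 0 then {} else layer G n w (d - 1))"
  by (cases d) (auto simp: prevL_def lay_def nth_append simp del: upt_Suc)

lemma lay_Suc: "lay w (Suc d) = lay w d @ [layer G n w (Suc d)]"
  by (simp add: lay_def)

lemma lay_0: "lay w 0 = [layer G n w 0]"
  by (simp add: lay_def)

lemma prevL_fin[simp]: "finite (prevL (lay w d))" by (simp add: prevL_lay)
lemma prevL_sub: "prevL (lay w d) \<subseteq> {..<n}" using layer_sub by (simp add: prevL_lay)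

lemma qry_lay: "qry n (lay w d) = sorted_list_of_set (prevL (lay w d)) @ map (\<lambda>v. v + n) (sorted_list_of_set (layer G n w d))"
  by (simp add: qry_def)

lemma qry_ne: "layer G n w d \<noteq> {} \<Longrightarrow> qry n (lay w d) \<noteq> []"
  by (simp add: qry_lay)

lemma gB_lay: "set (gB n E (qry n (lay w d))) =
   {u. u < n \<and> u \<notin> prevL (lay w d) \<and> u \<notin> layer G n w d \<and> (\<exists>v\<in>layer G n w d. {v, u} \<in> E)}"
  unfolding qry_lay by (rule gB_set) (use prevL_sub layer_sub in auto)

lemma union_gB: "(\<Union>i\<in>{0..<k}. set (gB n (x i) (qry n (lay w d)))) = layer G n w (Suc d)"
proof -
  have L: "layer G n w (Suc d) = {u. u < n \<and> u \<notin> (if d = 0 then {} else layer G n w (d - 1))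
      \<and> u \<notin> layer G n w d \<and> (\<exists>v\<in>layer G n w d. {v, u} \<in> G)}" by (rule layer_Suc[OF G_sub])
  have E: "\<And>u A. (\<exists>v\<in>A. {v, u} \<in> G) \<longleftrightarrow> (\<exists>i\<in>{0..<k}. \<exists>v\<in>A. {v, u} \<in> x i)"
    unfolding G_def atLeast0LessThan by blast
  show ?thesis unfolding gB_lay prevL_lay L E by blast
qed

lemma gB_sub_next: assumes ik: "i < k" shows "set (gB n (x i) (qry n (lay w d))) \<subseteq> layer G n w (Suc d)"
proof -
  have L: "layer G n w (Suc d) = {u. u < n \<and> u \<notin> (if d = 0 then {} else layer G n w (d - 1))
      \<and> u \<notin> layer G n w d \<and> (\<exists>v\<in>layer G n w d. {v, u} \<in> G)}" by (rule layer_Suc[OF G_sub])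
  have E: "\<And>u A. (\<exists>v\<in>A. {v, u} \<in> G) \<longleftrightarrow> (\<exists>i\<in>{0..<k}. \<exists>v\<in>A. {v, u} \<in> x i)"
    unfolding G_def atLeast0LessThan by blast
  show ?thesis unfolding gB_lay prevL_lay L E using ik by auto
qed

lemma okL_level:
  "okL k W (map (\<lambda>i. (i, qry n (lay w d), gB n (x i) (qry n (lay w d)))) [1..<k])"
proof -
  have a: "c < 2 ^ W" if "c < 2 * n" for c using that Wb by linarith
  have "\<forall>c\<in>set (qry n (lay w d)). c < 2 * n"
    unfolding qry_lay using prevL_sub layer_sub by fastforce
  moreover have "\<forall>c\<in>set (gB n E q). c < 2 * n" for E q by (auto simp: gB_def)
  ultimately show ?thesis unfolding okL_def using a by auto
qed

lemma lcost_level: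
  "lcost (map (\<lambda>i. (i, qry n (lay w d), gB n (x i) (qry n (lay w d)))) [1..<k])
    \<le> (k - 1) * (2 + card (prevL (lay w d)) + card (layer G n w d) + card (layer G n w (Suc d)))"
proof -
  have "lcost (map (\<lambda>i. (i, qry n (lay w d), gB n (x i) (qry n (lay w d)))) [1..<k])
     \<le> length [1..<k] * (2 + card (prevL (lay w d)) + card (layer G n w d) + card (layer G n w (Suc d)))"
  proof (rule lcost_map_le, intro ballI)
    fix i assume "i \<in> set [1..<k]"
    then have ik: "i < k" by simp
    have "length (qry n (lay w d)) = card (prevL (lay w d)) + card (layer G n w d)"
      unfolding qry_lay by (rule length_qry) auto
    moreover have "length (gB n (x i) (qry n (lay w d))) \<le> card (layer G n w (Suc d))"
      by (rule length_gB_le[OF gB_sub_next[OF ik]]) simp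
    ultimately show "(case (i, qry n (lay w d), gB n (x i) (qry n (lay w d))) of (j, q, a) \<Rightarrow> 2 + length q + length a)
      \<le> 2 + card (prevL (lay w d)) + card (layer G n w d) + card (layer G n w (Suc d))" by simp
  qed
  then show ?thesis by simp
qed

lemma bfs:
  assumes "layer G n w d \<noteq> {}"
  shows "\<exists>L D. STEPS n k s t x (PhB (x 0) Ls ws w (lay w d) (set (gB n (x 0) (qry n (lay w d)))) 1 dn) L
      (startBFS n (x 0) Ls ws ((w, lay w D) # dn)) \<and> layer G n w (Suc D) = {} \<and> okL k W L
      \<and> lcost L \<le> (k - 1) * (card (prevL (lay w d)) + 2 * card (layer G n w d) + 7 * card (R w (Suc d)) + 3)"
  using assms
proof (induction "card (R w (Suc d))" arbitrary: d rule: less_induct)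
  case less
  let ?q = "qry n (lay w d)"
  let ?L1 = "map (\<lambda>i. (i, ?q, gB n (x i) ?q)) [1..<k]"
  have st1: "STEPS n k s t x (PhB (x 0) Ls ws w (lay w d) (set (gB n (x 0) ?q)) 1 dn) ?L1
     (fin_level n (x 0) Ls ws w (lay w d) (set (gB n (x 0) ?q) \<union> (\<Union>i\<in>{1..<k}. set (gB n (x i) ?q))) dn)"
    using k2 qry_ne[OF less.prems] by (intro level) auto
  have "set (gB n (x 0) ?q) \<union> (\<Union>i\<in>{1..<k}. set (gB n (x i) ?q)) = (\<Union>i\<in>{0..<k}. set (gB n (x i) ?q))"
  proof -
    have "{0..<k} = insert 0 {1..<k}" using k2 by auto
    then show ?thesis by simp
  qed
  also have "\<dots> = layer G n w (Suc d)" by (rule union_gB)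
  finally have accq: "set (gB n (x 0) ?q) \<union> (\<Union>i\<in>{1..<k}. set (gB n (x i) ?q)) = layer G n w (Suc d)" .
  have c1: "lcost ?L1 \<le> (k - 1) * (2 + card (prevL (lay w d)) + card (layer G n w d) + card (layer G n w (Suc d)))"
    by (rule lcost_level)
  have o1: "okL k W ?L1" by (rule okL_level)
  show ?case
  proof (cases "layer G n w (Suc d) = {}")
    case True
    have "STEPS n k s t x (PhB (x 0) Ls ws w (lay w d) (set (gB n (x 0) ?q)) 1 dn) ?L1
      (startBFS n (x 0) Ls ws ((w, lay w d) # dn))"
    proof -
      have eq: "fin_level n (x 0) Ls ws w (lay w d) (layer G n w (Suc d)) dn =
        startBFS n (x 0) Ls ws ((w, lay w d) # dn)"
        using True by (simp add: fin_level_def)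
      show ?thesis using st1[unfolded accq eq] .
    qed
    moreover have "lcost ?L1 \<le> (k - 1) * (card (prevL (lay w d)) + 2 * card (layer G n w d) + 7 * card (R w (Suc d)) + 3)"
    proof -
      have "(k - 1) * (2 + card (prevL (lay w d)) + card (layer G n w d) + card (layer G n w (Suc d)))
          \<le> (k - 1) * (card (prevL (lay w d)) + 2 * card (layer G n w d) + 7 * card (R w (Suc d)) + 3)"
        by (rule mult_le_mono2) (use True in simp)
      then show ?thesis using c1 by linarith
    qed
    ultimately show ?thesis using True o1 by blast
  next
    case False
    have "card (layer G n w (Suc d)) \<noteq> 0" using False layer_fin[of w "Suc d"] card_0_eq by blast
    then have lt: "card (R w (Suc (Suc d))) < card (R w (Suc d))"
      using card_R[of w "Suc d"] by linarith
    obtain L D where L: "STEPS n k s t x (PhB (x 0) Ls ws w (lay w (Suc d)) (set (gB n (x 0) (qry n (lay w (Suc d))))) 1 dn) L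
      (startBFS n (x 0) Ls ws ((w, lay w D) # dn))" "layer G n w (Suc D) = {}" "okL k W L"
      "lcost L \<le> (k - 1) * (card (prevL (lay w (Suc d))) + 2 * card (layer G n w (Suc d)) + 7 * card (R w (Suc (Suc d))) + 3)"
      using less.hyps[OF lt False] by blast
    have st2: "STEPS n k s t x (PhB (x 0) Ls ws w (lay w d) (set (gB n (x 0) ?q)) 1 dn) ?L1
       (PhB (x 0) Ls ws w (lay w (Suc d)) (set (gB n (x 0) (qry n (lay w (Suc d))))) 1 dn)"
    proof -
      have eq: "fin_level n (x 0) Ls ws w (lay w d) (layer G n w (Suc d)) dn =
        PhB (x 0) Ls ws w (lay w (Suc d)) (set (gB n (x 0) (qry n (lay w (Suc d))))) 1 dn"
        using False by (simp add: fin_level_def lay_Suc)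
      show ?thesis using st1[unfolded accq eq] .
    qed
    have pv: "prevL (lay w (Suc d)) = layer G n w d" by (simp add: prevL_lay)
    have "lcost (?L1 @ L) \<le> (k - 1) * (2 + card (prevL (lay w d)) + card (layer G n w d) + card (layer G n w (Suc d)))
       + (k - 1) * (card (layer G n w d) + 2 * card (layer G n w (Suc d)) + 7 * card (R w (Suc (Suc d))) + 3)"
      using c1 L(4) pv by simp
    also have "\<dots> = (k - 1) * ((2 + card (prevL (lay w d)) + card (layer G n w d) + card (layer G n w (Suc d)))
       + (card (layer G n w d) + 2 * card (layer G n w (Suc d)) + 7 * card (R w (Suc (Suc d))) + 3))"
      by (rule add_mult_distrib2[symmetric])
    also have "\<dots> = (k - 1) * (5 + card (prevL (lay w d)) + 2 * card (layer G n w d) + 3 * card (layer G n w (Suc d)) + 7 * card (R w (Suc (Suc d))))"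
      by (intro arg_cong[where f="(*) (k - 1)"]) simp
    also have "\<dots> \<le> (k - 1) * (card (prevL (lay w d)) + 2 * card (layer G n w d) + 7 * card (R w (Suc d)) + 3)"
    proof (rule mult_le_mono2)
      have "card (layer G n w (Suc d)) \<noteq> 0" using False layer_fin[of w "Suc d"] card_0_eq by blast
      then have "card (layer G n w (Suc d)) \<ge> 1" by linarith
      then show "5 + card (prevL (lay w d)) + 2 * card (layer G n w d) + 3 * card (layer G n w (Suc d)) + 7 * card (R w (Suc (Suc d)))
          \<le> card (prevL (lay w d)) + 2 * card (layer G n w d) + 7 * card (R w (Suc d)) + 3"
        using card_R[of w "Suc d"] by simp
    qed
    finally have cc: "lcost (?L1 @ L) \<le> (k - 1) * (card (prevL (lay w d)) + 2 * card (layer G n w d) + 7 * card (R w (Suc d)) + 3)" .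
    show ?thesis
      by (rule exI[of _ "?L1 @ L"], rule exI[of _ D]) (use steps_trans[OF st2 L(1)] L(2,3) o1 cc in simp)
  qed
qed

end


lemma nbl_full:
  assumes "u < n" "{v, u} \<in> E" "u \<notin> set (nbl n s E v)"
  shows "card (set (nbl n s E v)) = s"
proof -
  let ?xs = "filter (\<lambda>u. {v, u} \<in> E) [0..<n]"
  have "u \<in> set ?xs" using assms by simp
  then have "\<not> length ?xs \<le> s" using assms(3) unfolding nbl_def by auto
  then have "length (take s ?xs) = s" by simp
  moreover have "distinct (take s ?xs)" by simp
  ultimately show ?thesis unfolding nbl_def by (simp add: distinct_card)
qed

context setting
begin

definition Pset :: "(nat \<times> nat) set" where
  "Pset = (\<Union>i<k. pdec n (gA n s (x i)))"

lemma Pset_char: "Pset = {(v, u). v < n \<and> (\<exists>i<k. u \<in> set (nbl n s (x i) v))}"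
  unfolding Pset_def pdec_gA[OF n0] by auto

lemma K1: "u \<in> Kof Pset v \<Longrightarrow> v < n \<and> u < n \<and> {v, u} \<in> G"
proof -
  assume "u \<in> Kof Pset v"
  then obtain i where i: "v < n" "i < k" "u \<in> set (nbl n s (x i) v)"
    unfolding Kof_def Pset_char by auto
  then have "u < n \<and> {v, u} \<in> x i" using set_nbl[of n s "x i" v] by auto
  then show ?thesis using i unfolding G_def by auto
qed

lemma K_sub: "Kof Pset v \<subseteq> {..<n}" using K1 by blast
lemma K_fin[simp]: "finite (Kof Pset v)" using K_sub finite_subset by blast

lemma K2:
  assumes "v < n" "card (Kof Pset v) < s" "{v, u} \<in> G"
  shows "u \<in> Kof Pset v"
proof (rule ccontr)
  assume nu: "u \<notin> Kof Pset v"
  obtain i where i: "i < k" "{v, u} \<in> x i" using assms(3) by (auto simp: G_def)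
  have un: "u < n" using edge_lt[OF G_sub assms(3)] by simp
  have sub: "set (nbl n s (x i) v) \<subseteq> Kof Pset v" unfolding Kof_def Pset_char using i assms(1) by auto
  have "u \<notin> set (nbl n s (x i) v)" using nu sub by blast
  then have "card (set (nbl n s (x i) v)) = s" using nbl_full[OF un i(2)] by blast
  moreover have "card (set (nbl n s (x i) v)) \<le> card (Kof Pset v)" using sub by (intro card_mono) auto
  ultimately show False using assms(2) by simp
qed

abbreviation "Ls \<equiv> Lof n s Pset"

lemma Ls_sub: "Ls \<subseteq> G"
  unfolding Lof_def using K1 by blast

lemma Ls_light: "{a, b} \<in> G \<Longrightarrow> card (Kof Pset a) < s \<Longrightarrow> {a, b} \<in> Ls"
proof -
  assume e: "{a, b} \<in> G" and l: "card (Kof Pset a) < s"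
  have a: "a < n" using edge_lt[OF G_sub e] by simp
  have "b \<in> Kof Pset a" using K2[OF a l e] .
  then show ?thesis unfolding Lof_def using a l by blast
qed

lemma Sof_props:
  assumes sn: "s \<le> n" and tb: "real n * (1 - real s / real n) ^ t < 1"
  shows "Sof n s t Pset \<subseteq> {..<n} \<and> card (Sof n s t Pset) \<le> t \<and>
     (\<forall>v<n. s \<le> card (Kof Pset v) \<longrightarrow> Sof n s t Pset \<inter> Kof Pset v \<noteq> {})"
proof -
  let ?F = "Kof Pset ` {v. v < n \<and> s \<le> card (Kof Pset v)}"
  have fin: "finite ?F" by simp
  have cF: "card ?F \<le> n"
  proof -
    have "card ?F \<le> card {v. v < n \<and> s \<le> card (Kof Pset v)}" by (rule card_image_le) simp
    also have "\<dots> \<le> card {..<n}" by (rule card_mono) auto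
    finally show ?thesis by simp
  qed
  have q0: "0 \<le> (1 - real s / real n) ^ t" using sn n0 by simp
  have "real (card ?F) * (1 - real s / real n) ^ t \<le> real n * (1 - real s / real n) ^ t"
    using cF q0 by (intro mult_right_mono) auto
  then have lt1: "real (card ?F) * (1 - real s / real n) ^ t < 1" using tb by linarith
  have FA: "\<forall>A\<in>?F. A \<subseteq> {..<n} \<and> s \<le> card A"
  proof
    fix A assume "A \<in> ?F"
    then obtain v where "A = Kof Pset v" "s \<le> card (Kof Pset v)" by blast
    then show "A \<subseteq> {..<n} \<and> s \<le> card A" using K_sub by simp
  qed
  obtain S where S: "S \<subseteq> {..<n}" "card S \<le> t" "\<forall>A\<in>?F. S \<inter> A \<noteq> {}"
    using hitting_set[OF fin FA sn n0 lt1] by blast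
  have "\<forall>v<n. s \<le> card (Kof Pset v) \<longrightarrow> S \<inter> Kof Pset v \<noteq> {}"
  proof (intro allI impI)
    fix v assume "v < n" "s \<le> card (Kof Pset v)"
    then have "Kof Pset v \<in> ?F" by blast
    then show "S \<inter> Kof Pset v \<noteq> {}" using S(3) by blast
  qed
  then have "\<exists>S. S \<subseteq> {..<n} \<and> card S \<le> t \<and> (\<forall>v<n. s \<le> card (Kof Pset v) \<longrightarrow> S \<inter> Kof Pset v \<noteq> {})"
    using S(1,2) by blast
  then show ?thesis unfolding Sof_def by (rule someI_ex)
qed

lemma sources:
  assumes "\<forall>w\<in>set ws. w < n"
  shows "\<exists>L dn'. STEPS n k s t x (startBFS n (x 0) Ls' ws dn) L (Fin (est n Ls' dn'))
     \<and> fst ` set dn' = fst ` set dn \<union> set ws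
     \<and> (\<forall>p\<in>set dn'. p \<in> set dn \<or> (\<exists>D. snd p = lay (fst p) D \<and> layer G n (fst p) (Suc D) = {}))
     \<and> okL k W L \<and> lcost L \<le> length ws * ((k - 1) * (7 * n + 5))"
  using assms
proof (induction ws arbitrary: dn)
  case Nil
  show ?case
    by (rule exI[of _ "[]"], rule exI[of _ dn]) (simp add: startBFS_def steps.refl)
next
  case (Cons w ws)
  have wn: "w < n" using Cons.prems by simp
  have l0: "lay w 0 = [{w}]" using layer_0[OF wn] by (simp add: lay_0)
  have ne: "layer G n w 0 \<noteq> {}" using layer_0[OF wn] by simp
  obtain L1 D where L1: "STEPS n k s t x (PhB (x 0) Ls' ws w (lay w 0) (set (gB n (x 0) (qry n (lay w 0)))) 1 dn) L1
      (startBFS n (x 0) Ls' ws ((w, lay w D) # dn))" "layer G n w (Suc D) = {}" "okL k W L1"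
      "lcost L1 \<le> (k - 1) * (card (prevL (lay w 0)) + 2 * card (layer G n w 0) + 7 * card (R w (Suc 0)) + 3)"
    using bfs[OF ne] by blast
  have c1: "lcost L1 \<le> (k - 1) * (7 * n + 5)"
  proof -
    have "card (prevL (lay w 0)) + 2 * card (layer G n w 0) + 7 * card (R w (Suc 0)) + 3 \<le> 7 * n + 5"
      using card_R_le[of w "Suc 0"] layer_0[OF wn] by (simp add: prevL_lay)
    then show ?thesis using L1(4) by (meson mult_le_mono2 order_trans)
  qed
  obtain L2 dn' where L2: "STEPS n k s t x (startBFS n (x 0) Ls' ws ((w, lay w D) # dn)) L2 (Fin (est n Ls' dn'))"
     "fst ` set dn' = fst ` set ((w, lay w D) # dn) \<union> set ws"
     "\<forall>p\<in>set dn'. p \<in> set ((w, lay w D) # dn) \<or> (\<exists>D. snd p = lay (fst p) D \<and> layer G n (fst p) (Suc D) = {})"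
     "okL k W L2" "lcost L2 \<le> length ws * ((k - 1) * (7 * n + 5))"
    using Cons.IH[of "(w, lay w D) # dn"] Cons.prems by auto
  have st: "startBFS n (x 0) Ls' (w # ws) dn = PhB (x 0) Ls' ws w (lay w 0) (set (gB n (x 0) (qry n (lay w 0)))) 1 dn"
    by (simp add: startBFS_def l0)
  show ?case
  proof (rule exI[of _ "L1 @ L2"], rule exI[of _ dn'], intro conjI)
    show "STEPS n k s t x (startBFS n (x 0) Ls' (w # ws) dn) (L1 @ L2) (Fin (est n Ls' dn'))"
      unfolding st by (rule steps_trans[OF L1(1) L2(1)])
    show "fst ` set dn' = fst ` set dn \<union> set (w # ws)" using L2(2) by auto
    show "\<forall>p\<in>set dn'. p \<in> set dn \<or> (\<exists>D. snd p = lay (fst p) D \<and> layer G n (fst p) (Suc D) = {})"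
      using L2(3) L1(2) by auto
    show "okL k W (L1 @ L2)" using L1(3) L2(4) by simp
    show "lcost (L1 @ L2) \<le> length (w # ws) * ((k - 1) * (7 * n + 5))" using c1 L2(5) by simp
  qed
qed

end


context setting
begin

lemma full_run:
  assumes sn: "s \<le> n" and tb: "real n * (1 - real s / real n) ^ t < 1"
  shows "\<exists>L out. STEPS n k s t x (ini n s (x 0)) L (Fin out) \<and> okL k W L
    \<and> lcost L \<le> (k - 1) * (2 + n * s) + t * ((k - 1) * (7 * n + 5))
    \<and> diameter n G \<le> out \<and> out \<le> diameter n G + 2"
proof -
  let ?LA = "map (\<lambda>i. (i, [], gA n s (x i))) [1..<k]"
  have pa: "STEPS n k s t x (PhA (x 0) 1 (pdec n (gA n s (x 0)))) ?LA
     (startB n s t (x 0) (pdec n (gA n s (x 0)) \<union> (\<Union>i\<in>{1..<k}. pdec n (gA n s (x i)))))"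
    using k2 by (intro phaseA) auto
  have "pdec n (gA n s (x 0)) \<union> (\<Union>i\<in>{1..<k}. pdec n (gA n s (x i))) = (\<Union>i\<in>insert 0 {1..<k}. pdec n (gA n s (x i)))"
    by simp
  also have "insert 0 {1..<k} = {..<k}" using k2 by auto
  finally have pe: "pdec n (gA n s (x 0)) \<union> (\<Union>i\<in>{1..<k}. pdec n (gA n s (x i))) = Pset"
    by (simp add: Pset_def)
  have pa': "STEPS n k s t x (ini n s (x 0)) ?LA (startB n s t (x 0) Pset)"
    using pa unfolding pe ini_def .
  have cA: "lcost ?LA \<le> (k - 1) * (2 + n * s)"
  proof -
    have "lcost ?LA \<le> length [1..<k] * (2 + n * s)"
      by (rule lcost_map_le) (use length_gA in auto)
    then show ?thesis by simp
  qed
  have oA: "okL k W ?LA"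
  proof -
    have "c < 2 ^ W" if "c \<in> set (gA n s E)" for c E
      using gA_lt[OF that] Wb by linarith
    then show ?thesis unfolding okL_def by auto
  qed
  define S where "S = Sof n s t Pset"
  have Sp: "S \<subseteq> {..<n}" "card S \<le> t" "\<forall>v<n. s \<le> card (Kof Pset v) \<longrightarrow> S \<inter> Kof Pset v \<noteq> {}"
    using Sof_props[OF sn tb] unfolding S_def by auto
  have fS: "finite S" using Sp(1) finite_subset by blast
  have wsn: "\<forall>w\<in>set (sorted_list_of_set S). w < n" using Sp(1) fS by auto
  obtain L2 dn' where L2: "STEPS n k s t x (startBFS n (x 0) Ls (sorted_list_of_set S) []) L2 (Fin (est n Ls dn'))"
     "fst ` set dn' = set (sorted_list_of_set S)"
     "\<forall>p\<in>set dn'. (\<exists>D. snd p = lay (fst p) D \<and> layer G n (fst p) (Suc D) = {})"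
     "okL k W L2" "lcost L2 \<le> length (sorted_list_of_set S) * ((k - 1) * (7 * n + 5))"
    using sources[OF wsn, of Ls "[]"] by auto
  have fst_dn: "fst ` set dn' = S" using L2(2) fS by simp
  have stB: "startB n s t (x 0) Pset = startBFS n (x 0) Ls (sorted_list_of_set S) []"
    by (simp add: startB_def S_def)
  have c2: "lcost L2 \<le> t * ((k - 1) * (7 * n + 5))"
    using L2(5) Sp(2) fS by (metis length_sorted_list_of_set mult_le_mono1 order_trans)
  have light: "\<forall>a b. {a, b} \<in> G \<longrightarrow> card (Kof Pset a) < s \<longrightarrow> {a, b} \<in> Ls"
    using Ls_light by blast
  have heavy: "\<forall>y<n. \<not> card (Kof Pset y) < s \<longrightarrow> (\<exists>p\<in>set dn'. {y, fst p} \<in> G)"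
  proof (intro allI impI)
    fix y assume y: "y < n" "\<not> card (Kof Pset y) < s"
    then obtain w where w: "w \<in> S" "w \<in> Kof Pset y" using Sp(3) by fastforce
    obtain p where p: "p \<in> set dn'" "fst p = w" using w(1) fst_dn by force
    have "{y, w} \<in> G" using K1[OF w(2)] by simp
    then show "\<exists>p\<in>set dn'. {y, fst p} \<in> G" using p by blast
  qed
  have dnok: "\<forall>p\<in>set dn'. \<forall>u<n. ldist (snd p) u = gdist G (fst p) u"
  proof (intro ballI allI impI)
    fix p u assume p: "p \<in> set dn'" and u: "u < n"
    obtain D where D: "snd p = lay (fst p) D" "layer G n (fst p) (Suc D) = {}" using L2(3) p by auto
    show "ldist (snd p) u = gdist G (fst p) u"
      by (rule ldist_correct[OF G_sub _ D(2) u]) (simp add: D(1) lay_def)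
  qed
  note eb = est_bounds[OF G_sub Ls_sub light heavy dnok]
  show ?thesis
  proof (rule exI[of _ "?LA @ L2"], rule exI[of _ "est n Ls dn'"], intro conjI)
    show "STEPS n k s t x (ini n s (x 0)) (?LA @ L2) (Fin (est n Ls dn'))"
      using steps_trans[OF pa'[unfolded stB] L2(1)] .
    show "okL k W (?LA @ L2)" using oA L2(4) by simp
    show "lcost (?LA @ L2) \<le> (k - 1) * (2 + n * s) + t * ((k - 1) * (7 * n + 5))"
      using cA c2 by simp
  qed (use eb in auto)
qed

end


lemma arith_core:
  fixes q g K S T Wp N :: real
  assumes q4: "q \<ge> 4" and g4: "g \<ge> 4" and K0: "K \<ge> 0" and N: "N = q * q"
    and S0: "0 \<le> S" and S1: "S \<le> q + 1" and T0: "0 \<le> T" and T1: "T \<le> q * g + 2"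
    and W0: "0 \<le> Wp" and W1: "Wp \<le> 4 * g"
  shows "Wp * (K * (2 + N * S) + T * (K * (7 * N + 5))) \<le> 72 * K * N * q * g ^ 2"
proof -
  have N16: "N \<ge> 16" using q4 N mult_mono[OF q4 q4] by linarith
  have "N * 4 \<le> N * q" by (rule mult_left_mono[OF q4]) (use N16 in simp)
  then have Nq: "N * q \<ge> 4 * N" by simp
  have "N * q * 1 \<le> N * q * g" by (rule mult_left_mono) (use g4 Nq N16 in auto)
  then have Nqg: "N * q * g \<ge> N * q" by simp
  have A: "2 + N * S \<le> 2 * (N * q * g)"
  proof -
    have "N * S \<le> N * (q + 1)" using S1 N16 by (intro mult_left_mono) auto
    then have h: "N * S \<le> N * q + N" by (simp add: algebra_simps)
    show ?thesis using h Nq Nqg N16 by linarith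
  qed
  have qg: "q * g \<ge> 16" using mult_mono[OF q4 g4] q4 by simp
  have B: "T * (7 * N + 5) \<le> 16 * (N * q * g)"
  proof -
    have "T * (7 * N + 5) \<le> (q * g + 2) * (7 * N + 5)" using T1 N16 by (intro mult_right_mono) auto
    also have "\<dots> \<le> (2 * (q * g)) * (8 * N)" by (intro mult_mono) (use qg N16 in linarith)+
    also have "\<dots> = 16 * (N * q * g)" by (simp add: algebra_simps)
    finally show ?thesis .
  qed
  have inner: "K * (2 + N * S) + T * (K * (7 * N + 5)) \<le> 18 * K * (N * q * g)"
  proof -
    have "K * (2 + N * S) \<le> K * (2 * (N * q * g))" using A K0 by (rule mult_left_mono)
    moreover have "K * (T * (7 * N + 5)) \<le> K * (16 * (N * q * g))" using B K0 by (rule mult_left_mono)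
    ultimately show ?thesis by (simp add: algebra_simps)
  qed
  have inn0: "0 \<le> K * (2 + N * S) + T * (K * (7 * N + 5))" using K0 S0 T0 N16 by simp
  have "Wp * (K * (2 + N * S) + T * (K * (7 * N + 5))) \<le> (4 * g) * (18 * K * (N * q * g))"
    using W1 inner W0 inn0 g4 by (intro mult_mono) auto
  also have "\<dots> = 72 * K * N * q * g ^ 2" by (simp add: algebra_simps power2_eq_square)
  finally show ?thesis .
qed

definition sv :: "nat \<Rightarrow> nat" where "sv n = nat \<lceil>sqrt (real n)\<rceil>"
definition tv :: "nat \<Rightarrow> nat" where "tv n = nat \<lceil>sqrt (real n) * ln (real n)\<rceil> + 1"
definition Wv :: "nat \<Rightarrow> nat" where "Wv n = 2 * ceillog2 (Suc n)"

lemma Wv_ok: "2 * n + n * n \<le> 2 ^ Wv n"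
proof -
  have "Suc n \<le> 2 ^ ceillog2 (Suc n)" using le_two_power_ceillog2[of "Suc n"] by simp
  then have "Suc n * Suc n \<le> 2 ^ ceillog2 (Suc n) * 2 ^ ceillog2 (Suc n)" using mult_le_mono by blast
  also have "\<dots> = 2 ^ Wv n" by (simp add: Wv_def power_add[symmetric] mult_2)
  finally show ?thesis by simp
qed

lemma sv_bounds: "sqrt (real n) \<le> real (sv n)" "real (sv n) \<le> sqrt (real n) + 1"
proof -
  show "sqrt (real n) \<le> real (sv n)" unfolding sv_def by (rule real_nat_ceiling_ge)
  have "real (sv n) = of_int \<lceil>sqrt (real n)\<rceil>" unfolding sv_def by simp
  then show "real (sv n) \<le> sqrt (real n) + 1" using of_int_ceiling_le_add_one by simp
qed

lemma sv_le: "1 \<le> n \<Longrightarrow> sv n \<le> n"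
proof -
  assume "1 \<le> n"
  then have "real n \<le> real n * real n" by (simp add: mult_le_cancel_left1)
  then have "sqrt (real n) \<le> sqrt (real n * real n)" by (rule real_sqrt_le_mono)
  then have h: "sqrt (real n) \<le> real n" by simp
  show ?thesis unfolding sv_def using h by (simp add: ceiling_le_iff nat_le_iff)
qed

lemma tv_bounds:
  assumes "1 \<le> n"
  shows "sqrt (real n) * ln (real n) < real (tv n)" "real (tv n) \<le> sqrt (real n) * ln (real n) + 2"
proof -
  have "sqrt (real n) * ln (real n) \<le> real (nat \<lceil>sqrt (real n) * ln (real n)\<rceil>)" by (rule real_nat_ceiling_ge)
  then show "sqrt (real n) * ln (real n) < real (tv n)" unfolding tv_def by simp
  have nn: "0 \<le> sqrt (real n) * ln (real n)" using assms by simp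
  have "real (nat \<lceil>sqrt (real n) * ln (real n)\<rceil>) = of_int \<lceil>sqrt (real n) * ln (real n)\<rceil>"
    using nn by simp
  then show "real (tv n) \<le> sqrt (real n) * ln (real n) + 2"
    unfolding tv_def using of_int_ceiling_le_add_one[of "sqrt (real n) * ln (real n)"] by simp linarith
qed

lemma tb_ok:
  assumes n2: "2 \<le> n"
  shows "real n * (1 - real (sv n) / real n) ^ tv n < 1"
proof -
  let ?y = "real (sv n) / real n"
  have npos: "0 < real n" using n2 by simp
  have y0: "0 \<le> ?y" by simp
  have y1: "?y \<le> 1" using sv_le[of n] n2 by (simp add: divide_le_eq_1)
  have "(1 - ?y) ^ tv n \<le> exp (- ?y) ^ tv n"
    using y1 exp_ge_add_one_self[of "- ?y"] by (intro power_mono) auto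
  also have "\<dots> = exp (- (?y * real (tv n)))"
    by (simp add: exp_of_nat_mult[symmetric] mult.commute)
  also have "\<dots> < exp (- ln (real n))"
  proof -
    have sq: "sqrt (real n) * sqrt (real n) = real n" by simp
    have sqp: "0 < sqrt (real n)" using npos by simp
    have "real n * ln (real n) = sqrt (real n) * (sqrt (real n) * ln (real n))" using sq by (simp add: mult.assoc[symmetric])
    also have "\<dots> < sqrt (real n) * real (tv n)" using tv_bounds(1)[of n] n2 sqp by simp
    also have "\<dots> \<le> real (sv n) * real (tv n)" using sv_bounds(1)[of n] by (intro mult_right_mono) auto
    finally have "real n * ln (real n) < real (sv n) * real (tv n)" .
    then have "ln (real n) < ?y * real (tv n)" using npos by (simp add: pos_less_divide_eq mult.commute)
    then show ?thesis by simp
  qed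
  also have "\<dots> = 1 / real n" using npos by (simp add: exp_minus inverse_eq_divide)
  finally have "(1 - ?y) ^ tv n < 1 / real n" .
  then show ?thesis using npos by (simp add: pos_less_divide_eq mult.commute)
qed


lemma n16_facts:
  assumes n: "16 \<le> n"
  shows "4 \<le> sqrt (real n)" "4 \<le> log 2 (real n)" "ln (real n) \<le> log 2 (real n)"
    "real (Wv n) + 1 \<le> 4 * log 2 (real n)"
proof -
  have rn: "16 \<le> real n" using n by simp
  show "4 \<le> sqrt (real n)" by (rule real_le_rsqrt) (use rn in simp)
  have "log 2 16 \<le> log 2 (real n)" using rn by (subst log_le_cancel_iff) auto
  moreover have "log 2 (16::real) = 4"
  proof -
    have "(16::real) = 2 ^ 4" by simp
    then have "log 2 (16::real) = log 2 (2 ^ 4)" by simp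
    also have "\<dots> = 4 * log 2 2" by (subst log_nat_power) auto
    finally show ?thesis by simp
  qed
  ultimately show lg4: "4 \<le> log 2 (real n)" by simp
  have ln2: "0 < ln (2::real)" "ln (2::real) < 1" using ln_2_less_1 by auto
  have lnn: "0 \<le> ln (real n)" using rn by simp
  have "ln (real n) * ln 2 \<le> ln (real n)" using ln2 lnn by (simp add: mult_left_le)
  then show "ln (real n) \<le> log 2 (real n)" unfolding log_def using ln2 by (simp add: le_divide_eq)
  have c: "real (ceillog2 (Suc n)) < log 2 (real (Suc n)) + 1" by (rule ceillog2_less_log) simp
  have "log 2 (real (Suc n)) \<le> log 2 (2 * real n)" using rn by (subst log_le_cancel_iff) auto
  also have "\<dots> = 1 + log 2 (real n)" using rn by (simp add: log_mult)
  finally have "real (ceillog2 (Suc n)) < log 2 (real n) + 2" using c by simp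
  then show "real (Wv n) + 1 \<le> 4 * log 2 (real n)" unfolding Wv_def using lg4 by simp
qed

lemma cost_bound:
  assumes n: "16 \<le> n" and k: "1 \<le> k"
  shows "real ((Wv n + 1) * ((k - 1) * (2 + n * sv n) + tv n * ((k - 1) * (7 * n + 5))))
     \<le> 72 * real k * real n powr (3/2) * (log 2 (real n))^2"
proof -
  note f = n16_facts[OF n]
  let ?q = "sqrt (real n)" and ?g = "log 2 (real n)"
  have N: "real n = ?q * ?q" by simp
  have T1: "real (tv n) \<le> ?q * ?g + 2"
  proof -
    have "?q * ln (real n) \<le> ?q * ?g" using f(3) by (intro mult_left_mono) auto
    moreover have "real (tv n) \<le> ?q * ln (real n) + 2" using tv_bounds(2)[of n] n by simp
    ultimately show ?thesis by linarith
  qed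
  have main: "real (Wv n + 1) * (real (k - 1) * (2 + real n * real (sv n)) + real (tv n) * (real (k - 1) * (7 * real n + 5)))
      \<le> 72 * real (k - 1) * real n * ?q * ?g ^ 2"
    by (rule arith_core[OF f(1) f(2) _ N _ sv_bounds(2) _ T1 _]) (use f(4) in auto)
  have p: "real n powr (3/2) = real n * ?q"
  proof -
    have "real n powr (3/2) = real n powr (1 + 1/2)" by simp
    also have "\<dots> = real n powr 1 * real n powr (1/2)" by (rule powr_add)
    also have "\<dots> = real n * real n powr (1/2)" using n by simp
    also have "\<dots> = real n * ?q" by (simp add: powr_half_sqrt)
    finally show ?thesis .
  qed
  have "72 * real (k - 1) * real n * ?q * ?g ^ 2 \<le> 72 * real k * real n * ?q * ?g ^ 2"
    by (intro mult_right_mono) auto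
  then have pr: "real (Wv n + 1) * (real (k - 1) * (2 + real n * real (sv n)) + real (tv n) * (real (k - 1) * (7 * real n + 5)))
      \<le> 72 * real k * real n powr (3/2) * ?g ^ 2"
    using main p by (simp add: mult.assoc)
  have eq: "real ((Wv n + 1) * ((k - 1) * (2 + n * sv n) + tv n * ((k - 1) * (7 * n + 5))))
     = real (Wv n + 1) * (real (k - 1) * (2 + real n * real (sv n)) + real (tv n) * (real (k - 1) * (7 * real n + 5)))"
    by (simp only: of_nat_mult of_nat_add of_nat_numeral)
  show ?thesis unfolding eq by (rule pr)
qed


theorem theorem6p11:
  shows "\<exists>C::real. \<exists>N0::nat. \<forall>k n. k \<ge> 1 \<longrightarrow> n \<ge> N0 \<longrightarrow>
    (\<exists>(P :: (nat set set, enat) protocol) (R :: nat).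
      \<forall>x :: nat \<Rightarrow> nat set set. (\<forall>i<k. x i \<subseteq> all_edges n) \<longrightarrow>
        (\<forall>r \<in> rand_space k R. \<exists>f tr out. run P x r f = Some (tr, out)
             \<and> valid_transcript k tr
             \<and> real (cost tr) \<le> C * real k * real n powr (3/2) * (log 2 (real n))^2)
        \<and> real (card {r \<in> rand_space k R. \<exists>f tr out. run P x r f = Some (tr, out)
             \<and> diameter n (\<Union>i<k. x i) \<le> out \<and> out \<le> diameter n (\<Union>i<k. x i) + 2})
          \<ge> 0.99 * real (card (rand_space k R)))"
proof (intro exI[of _ "72::real"] exI[of _ "16::nat"] allI impI)
  fix k n :: nat
  assume k: "1 \<le> k" and n: "16 \<le> n"
  have rhs0: "0 \<le> 72 * real k * real n powr (3/2) * (log 2 (real n))^2" by simp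
  have gen: "\<exists>(P :: (nat set set, enat) protocol).
      \<forall>x :: nat \<Rightarrow> nat set set. (\<forall>i<k. x i \<subseteq> all_edges n) \<longrightarrow>
        (\<forall>r. \<exists>f tr out. run P x r f = Some (tr, out) \<and> valid_transcript k tr
             \<and> real (cost tr) \<le> 72 * real k * real n powr (3/2) * (log 2 (real n))^2
             \<and> diameter n (\<Union>i<k. x i) \<le> out \<and> out \<le> diameter n (\<Union>i<k. x i) + 2)"
  proof (cases "k = 1")
    case True
    define P :: "(nat set set, enat) protocol" where "P = (\<lambda>h inp r vw. Inr (diameter n inp))"
    have "\<forall>x :: nat \<Rightarrow> nat set set. (\<forall>i<k. x i \<subseteq> all_edges n) \<longrightarrow>
        (\<forall>r. \<exists>f tr out. run P x r f = Some (tr, out) \<and> valid_transcript k tr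
             \<and> real (cost tr) \<le> 72 * real k * real n powr (3/2) * (log 2 (real n))^2
             \<and> diameter n (\<Union>i<k. x i) \<le> out \<and> out \<le> diameter n (\<Union>i<k. x i) + 2)"
    proof (intro allI impI)
      fix x :: "nat \<Rightarrow> nat set set" and r
      have "run P x r 1 = Some ([], diameter n (\<Union>i<k. x i))"
        using True by (simp add: run_def P_def lessThan_Suc)
      then show "\<exists>f tr out. run P x r f = Some (tr, out) \<and> valid_transcript k tr
             \<and> real (cost tr) \<le> 72 * real k * real n powr (3/2) * (log 2 (real n))^2
             \<and> diameter n (\<Union>i<k. x i) \<le> out \<and> out \<le> diameter n (\<Union>i<k. x i) + 2"
        using rhs0 by (intro exI[of _ 1] exI[of _ "[]"] exI[of _ "diameter n (\<Union>i<k. x i)"])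
          (simp add: valid_transcript_def cost_def)
    qed
    then show ?thesis by blast
  next
    case False
    then have k2: "2 \<le> k" using k by simp
    define s where "s = sv n"
    define t where "t = tv n"
    define W where "W = Wv n"
    define P where "P = mkP (nxt n) (upd n k s t) (ini n s) (gr n s) W"
    have "\<forall>x :: nat \<Rightarrow> nat set set. (\<forall>i<k. x i \<subseteq> all_edges n) \<longrightarrow>
        (\<forall>r. \<exists>f tr out. run P x r f = Some (tr, out) \<and> valid_transcript k tr
             \<and> real (cost tr) \<le> 72 * real k * real n powr (3/2) * (log 2 (real n))^2
             \<and> diameter n (\<Union>i<k. x i) \<le> out \<and> out \<le> diameter n (\<Union>i<k. x i) + 2)"
    proof (intro allI impI)
      fix x :: "nat \<Rightarrow> nat set set" and r
      assume xe: "\<forall>i<k. x i \<subseteq> all_edges n"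
      interpret setting n k s t W x
        by unfold_locales (use k2 xe n Wv_ok[of n] in \<open>auto simp: W_def\<close>)
      obtain L out where L: "STEPS n k s t x (ini n s (x 0)) L (Fin out)" "okL k W L"
        "lcost L \<le> (k - 1) * (2 + n * s) + t * ((k - 1) * (7 * n + 5))"
        "diameter n G \<le> out" "out \<le> diameter n G + 2"
      proof -
        have "s \<le> n" unfolding s_def using sv_le[of n] n by simp
        moreover have "real n * (1 - real s / real n) ^ t < 1" unfolding s_def t_def using tb_ok[of n] n by simp
        ultimately show ?thesis using full_run that by blast
      qed
      have ex: "exec P x r (2 * length L + 1) 0 (T W []) = Some (T W [] @ T W L, out)"
        unfolding P_def
        by (rule exec_steps[OF L(1)]) (use L(2) in simp_all)
      have run: "run P x r (2 * length L + 1) = Some (T W L, out)"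
        using ex by (simp add: run_def)
      have "real (cost (T W L)) \<le> real ((W + 1) * lcost L)" using cost_T[of W L] by (simp only: of_nat_le_iff)
      also have "\<dots> \<le> real ((W + 1) * ((k - 1) * (2 + n * s) + t * ((k - 1) * (7 * n + 5))))"
        using L(3) by (simp only: of_nat_le_iff) (rule mult_le_mono2)
      also have "\<dots> \<le> 72 * real k * real n powr (3/2) * (log 2 (real n))^2"
        unfolding W_def s_def t_def by (rule cost_bound[OF n k])
      finally have c: "real (cost (T W L)) \<le> 72 * real k * real n powr (3/2) * (log 2 (real n))^2" .
      show "\<exists>f tr out. run P x r f = Some (tr, out) \<and> valid_transcript k tr
             \<and> real (cost tr) \<le> 72 * real k * real n powr (3/2) * (log 2 (real n))^2
             \<and> diameter n (\<Union>i<k. x i) \<le> out \<and> out \<le> diameter n (\<Union>i<k. x i) + 2"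
        using run c valid_T[OF L(2)] L(4,5) unfolding G_def by blast
    qed
    then show ?thesis by blast
  qed
  then obtain P :: "(nat set set, enat) protocol" where good:
    "\<forall>x :: nat \<Rightarrow> nat set set. (\<forall>i<k. x i \<subseteq> all_edges n) \<longrightarrow>
        (\<forall>r. \<exists>f tr out. run P x r f = Some (tr, out) \<and> valid_transcript k tr
             \<and> real (cost tr) \<le> 72 * real k * real n powr (3/2) * (log 2 (real n))^2
             \<and> diameter n (\<Union>i<k. x i) \<le> out \<and> out \<le> diameter n (\<Union>i<k. x i) + 2)"
    by blast
  show "\<exists>(P :: (nat set set, enat) protocol) (R :: nat).
      \<forall>x :: nat \<Rightarrow> nat set set. (\<forall>i<k. x i \<subseteq> all_edges n) \<longrightarrow>
        (\<forall>r \<in> rand_space k R. \<exists>f tr out. run P x r f = Some (tr, out)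
             \<and> valid_transcript k tr
             \<and> real (cost tr) \<le> 72 * real k * real n powr (3/2) * (log 2 (real n))^2)
        \<and> real (card {r \<in> rand_space k R. \<exists>f tr out. run P x r f = Some (tr, out)
             \<and> diameter n (\<Union>i<k. x i) \<le> out \<and> out \<le> diameter n (\<Union>i<k. x i) + 2})
          \<ge> 0.99 * real (card (rand_space k R))"
  proof (intro exI[of _ P] exI[of _ "0::nat"] allI impI)
    fix x :: "nat \<Rightarrow> nat set set"
    assume xe: "\<forall>i<k. x i \<subseteq> all_edges n"
    have A: "\<forall>r \<in> rand_space k 0. \<exists>f tr out. run P x r f = Some (tr, out)
             \<and> valid_transcript k tr
             \<and> real (cost tr) \<le> 72 * real k * real n powr (3/2) * (log 2 (real n))^2"
      using good xe by blast
    have "{r \<in> rand_space k 0. \<exists>f tr out. run P x r f = Some (tr, out)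
             \<and> diameter n (\<Union>i<k. x i) \<le> out \<and> out \<le> diameter n (\<Union>i<k. x i) + 2} = rand_space k 0"
      using good xe by blast
    then have B: "real (card {r \<in> rand_space k 0. \<exists>f tr out. run P x r f = Some (tr, out)
             \<and> diameter n (\<Union>i<k. x i) \<le> out \<and> out \<le> diameter n (\<Union>i<k. x i) + 2})
          \<ge> 0.99 * real (card (rand_space k 0))"
      by simp
    show "(\<forall>r \<in> rand_space k 0. \<exists>f tr out. run P x r f = Some (tr, out)
             \<and> valid_transcript k tr
             \<and> real (cost tr) \<le> 72 * real k * real n powr (3/2) * (log 2 (real n))^2)
        \<and> real (card {r \<in> rand_space k 0. \<exists>f tr out. run P x r f = Some (tr, out)
             \<and> diameter n (\<Union>i<k. x i) \<le> out \<and> out \<le> diameter n (\<Union>i<k. x i) + 2})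
          \<ge> 0.99 * real (card (rand_space k 0))"
      using A B by blast
  qed
qed


end
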